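(* Let $X\subseteq\mathbb{R}^m$ be compact, $\mathsf{H}$ a separable Hilbert space, and $\mathcal{P}\in\mathcal{B}_2(L^2(X;\mathsf{H}))$ Hermitian and non-negative definite with continuous kernel $P\in C^0(X\times X;\mathcal{B}_2(\mathsf{H}))$. Let $\{(\lambda_\ell,\phi_\ell)\}_\ell$ be the eigenpairs of $\mathcal{P}$ with $\{\phi_\ell\}$ orthonormal and continuous. If the series $$R(x,y)=\sum_{\ell=1}^\infty\lambda_\ell\,\phi_\ell(x)\otimes\phi_\ell(y)$$ converges in $\mathcal{B}_2(\mathsf{H})$ uniformly in either $x$ or $y$, then $P(x,y)=R(x,y)$ for all $(x,y)\in X\times X$.
   Context: For $a,b\in\mathsf{H}$ (inner product conjugate linear in the first slot), $a\otimes b$ is the rank-one operator $(a\otimes b)h=\langle b,h\rangle_{\mathsf{H}}a$.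
   Formalization: X is also such that every nonempty relatively open subset of X has positive Lebesgue measure. The statement above fails without it. *)

theory Defs
  imports "HOL-Analysis.Analysis"
begin

text \<open>The distribution has no class of complex inner product spaces, so we introduce one.
  The inner product is conjugate linear in the first slot and linear in the second.\<close>

class complex_inner = real_normed_vector +
  fixes scaleC :: "complex \<Rightarrow> 'a \<Rightarrow> 'a"
  fixes cinner :: "'a \<Rightarrow> 'a \<Rightarrow> complex"
  assumes scaleC_of_real: "scaleC (complex_of_real r) x = scaleR r x"
  assumes scaleC_add_right: "scaleC a (x + y) = scaleC a x + scaleC a y"
  assumes scaleC_add_left: "scaleC (a + b) x = scaleC a x + scaleC b x"
  assumes scaleC_scaleC: "scaleC a (scaleC b x) = scaleC (a * b) x"
  assumes norm_scaleC: "norm (scaleC a x) = cmod a * norm x"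
  assumes cinner_commute: "cinner x y = cnj (cinner y x)"
  assumes cinner_add_right: "cinner x (y + z) = cinner x y + cinner x z"
  assumes cinner_scaleC_right: "cinner x (scaleC a y) = a * cinner x y"
  assumes cinner_self: "cinner x x = complex_of_real ((norm x)\<^sup>2)"

definition bounded_clinear :: "('a::complex_inner \<Rightarrow> 'b::complex_inner) \<Rightarrow> bool" where
  "bounded_clinear T \<longleftrightarrow> bounded_linear T \<and> (\<forall>c x. T (scaleC c x) = scaleC c (T x))"

definition is_onb :: "'a::complex_inner set \<Rightarrow> bool" where
  "is_onb B \<longleftrightarrow> (\<forall>e\<in>B. norm e = 1) \<and> (\<forall>e\<in>B. \<forall>f\<in>B. e \<noteq> f \<longrightarrow> cinner e f = 0)
     \<and> (\<forall>x. (\<forall>e\<in>B. cinner e x = 0) \<longrightarrow> x = 0)"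

definition hilbert_schmidt :: "('a::complex_inner \<Rightarrow> 'a) \<Rightarrow> bool" where
  "hilbert_schmidt T \<longleftrightarrow> bounded_clinear T \<and>
     (\<exists>B. is_onb B \<and> (\<lambda>e. (norm (T e))\<^sup>2) summable_on B)"

definition hs_norm :: "('a::complex_inner \<Rightarrow> 'a) \<Rightarrow> real" where
  "hs_norm T = sqrt (\<Sum>\<^sub>\<infinity>e\<in>(SOME B. is_onb B). (norm (T e))\<^sup>2)"

text \<open>Rank-one operator (a \<otimes> b) h = \<langle>b,h\<rangle> a.\<close>
definition rank1 :: "'a::complex_inner \<Rightarrow> 'a \<Rightarrow> 'a \<Rightarrow> 'a" where
  "rank1 a b = (\<lambda>h. scaleC (cinner b h) a)"

definition L2 :: "'a::euclidean_space set \<Rightarrow> ('a \<Rightarrow> 'h::{complex_inner,banach,second_countable_topology}) set" where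
  "L2 X = {f. f \<in> borel_measurable (lebesgue_on X) \<and>
                integrable (lebesgue_on X) (\<lambda>x. (norm (f x))\<^sup>2)}"

definition L2_inner :: "'a::euclidean_space set \<Rightarrow> ('a \<Rightarrow> 'h::{complex_inner,banach,second_countable_topology})
    \<Rightarrow> ('a \<Rightarrow> 'h) \<Rightarrow> complex" where
  "L2_inner X f g = (\<integral>x. cinner (f x) (g x) \<partial>lebesgue_on X)"

definition kernel_op :: "'a::euclidean_space set \<Rightarrow> ('a \<Rightarrow> 'a \<Rightarrow> 'h \<Rightarrow> 'h)
    \<Rightarrow> ('a \<Rightarrow> 'h::{complex_inner,banach,second_countable_topology}) \<Rightarrow> 'a \<Rightarrow> 'h" where
  "kernel_op X P f = (\<lambda>x. \<integral>y. P x y (f y) \<partial>lebesgue_on X)"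

end

theory Submission
  imports Defs
begin

section \<open>Algebra of complex inner product spaces\<close>

context
  fixes x y z :: "'a::complex_inner"
begin
end

lemma scaleC_one[simp]: "scaleC 1 (x::'a::complex_inner) = x"
  using scaleC_of_real[of 1 x] by simp

lemma scaleC_zero_left[simp]: "scaleC 0 (x::'a::complex_inner) = 0"
  using scaleC_of_real[of 0 x] by simp

lemma scaleC_zero_right[simp]: "scaleC a (0::'a::complex_inner) = 0"
  using scaleC_add_right[of a "0::'a" 0] by simp

lemma scaleC_minus_right: "scaleC a (- x) = - scaleC a (x::'a::complex_inner)"
proof -
  have "scaleC a x + scaleC a (-x) = 0" by (simp add: scaleC_add_right[symmetric])
  then show ?thesis by (metis minus_unique)
qed

lemma scaleC_diff_right: "scaleC a (x - y) = scaleC a x - scaleC a (y::'a::complex_inner)"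
  by (simp only: diff_conv_add_uminus scaleC_add_right scaleC_minus_right)

lemma scaleC_minus_left: "scaleC (- a) x = - scaleC a (x::'a::complex_inner)"
proof -
  have "scaleC a x + scaleC (-a) x = 0" by (simp add: scaleC_add_left[symmetric])
  then show ?thesis by (metis minus_unique)
qed

lemma scaleC_diff_left: "scaleC (a - b) x = scaleC a x - scaleC b (x::'a::complex_inner)"
  by (simp only: diff_conv_add_uminus scaleC_add_left scaleC_minus_left)

lemma scaleC_sum_right: "scaleC a (\<Sum>i\<in>I. f i) = (\<Sum>i\<in>I. scaleC a (f i::'a::complex_inner))"
  by (induction I rule: infinite_finite_induct) (auto simp: scaleC_add_right)

lemma scaleC_sum_left: "scaleC (\<Sum>i\<in>I. f i) x = (\<Sum>i\<in>I. scaleC (f i) (x::'a::complex_inner))"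
  by (induction I rule: infinite_finite_induct) (auto simp: scaleC_add_left)

lemma scaleR_scaleC: "r *\<^sub>R scaleC a x = scaleC (complex_of_real r * a) (x::'a::complex_inner)"
  by (metis scaleC_of_real scaleC_scaleC)

lemma scaleC_scaleR: "scaleC a (r *\<^sub>R x) = scaleC (a * complex_of_real r) (x::'a::complex_inner)"
  by (metis scaleC_of_real scaleC_scaleC)

lemma scaleC_scaleR_comm: "scaleC a (r *\<^sub>R x) = r *\<^sub>R scaleC a (x::'a::complex_inner)"
  by (simp add: scaleC_scaleR scaleR_scaleC mult.commute)

lemma cinner_zero_right[simp]: "cinner x (0::'a::complex_inner) = 0"
  using cinner_add_right[of x "0::'a" 0] by simp

lemma cinner_zero_left[simp]: "cinner (0::'a::complex_inner) x = 0"
  using cinner_commute[of 0 x] by simp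

lemma cinner_add_left: "cinner (x + y) z = cinner x z + cinner y (z::'a::complex_inner)"
  by (metis cinner_add_right cinner_commute complex_cnj_add)

lemma cinner_scaleC_left: "cinner (scaleC a x) y = cnj a * cinner x (y::'a::complex_inner)"
  by (metis cinner_commute cinner_scaleC_right complex_cnj_cnj complex_cnj_mult)

lemma cinner_minus_right: "cinner x (- y) = - cinner x (y::'a::complex_inner)"
proof -
  have "cinner x y + cinner x (-y) = 0" by (simp add: cinner_add_right[symmetric])
  then show ?thesis by (metis minus_unique)
qed

lemma cinner_minus_left: "cinner (- x) y = - cinner x (y::'a::complex_inner)"
proof -
  have "cinner x y + cinner (-x) y = 0" by (simp add: cinner_add_left[symmetric])
  then show ?thesis by (metis minus_unique)
qed

lemma cinner_diff_right: "cinner x (y - z) = cinner x y - cinner x (z::'a::complex_inner)"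
  by (simp only: diff_conv_add_uminus cinner_add_right cinner_minus_right)

lemma cinner_diff_left: "cinner (x - y) z = cinner x z - cinner y (z::'a::complex_inner)"
  by (simp only: diff_conv_add_uminus cinner_add_left cinner_minus_left)

lemma cinner_sum_right: "cinner x (\<Sum>i\<in>I. f i) = (\<Sum>i\<in>I. cinner x (f i::'a::complex_inner))"
  by (induction I rule: infinite_finite_induct) (auto simp: cinner_add_right)

lemma cinner_sum_left: "cinner (\<Sum>i\<in>I. f i) x = (\<Sum>i\<in>I. cinner (f i) (x::'a::complex_inner))"
  by (induction I rule: infinite_finite_induct) (auto simp: cinner_add_left)

lemma cinner_scaleR_right: "cinner x (r *\<^sub>R y) = r *\<^sub>R cinner x (y::'a::complex_inner)"
  by (metis cinner_scaleC_right scaleC_of_real scaleR_conv_of_real)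

lemma cinner_scaleR_left: "cinner (r *\<^sub>R x) y = r *\<^sub>R cinner x (y::'a::complex_inner)"
  by (metis cinner_scaleC_left complex_cnj_complex_of_real scaleC_of_real scaleR_conv_of_real)

lemma cinner_self_real: "cinner x (x::'a::complex_inner) = complex_of_real ((norm x)\<^sup>2)"
  by (rule cinner_self)

lemma norm_sq_cinner: "(norm (x::'a::complex_inner))\<^sup>2 = Re (cinner x x)"
  by (simp add: cinner_self)

lemma cinner_self_eq_zero[simp]: "cinner x x = 0 \<longleftrightarrow> (x::'a::complex_inner) = 0"
  by (simp add: cinner_self)

lemma norm_scaleC[simp]: "norm (scaleC a (x::'a::complex_inner)) = cmod a * norm x"
  by (rule norm_scaleC)

lemma norm_add_sq: "(norm (x + y))\<^sup>2 = (norm x)\<^sup>2 + (norm y)\<^sup>2 + 2 * Re (cinner x (y::'a::complex_inner))"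
proof -
  have "cinner (x+y) (x+y) = cinner x x + cinner y y + (cinner x y + cnj (cinner x y))"
    by (simp add: cinner_add_left cinner_add_right cinner_commute[of y x])
  then have "Re (cinner (x+y) (x+y)) = Re (cinner x x) + Re (cinner y y) + 2 * Re (cinner x y)"
    by simp
  then show ?thesis by (simp add: norm_sq_cinner)
qed

lemma cinner_cauchy_schwarz: "cmod (cinner x y) \<le> norm x * norm (y::'a::complex_inner)"
proof (cases "y = 0")
  case True then show ?thesis by simp
next
  case False
  define t where "t = cinner y x / complex_of_real ((norm y)\<^sup>2)"
  have ny: "norm y > 0" using False by simp
  have e1: "cinner (x - scaleC t y) (x - scaleC t y)
      = cinner x x - t * cinner x y - cnj t * cinner y x + cnj t * t * cinner y y"
    by (simp add: cinner_diff_left cinner_diff_right cinner_scaleC_left cinner_scaleC_right algebra_simps)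
  have tyy: "t * cinner y y = cinner y x"
    using ny by (simp add: t_def cinner_self)
  have e2: "cnj t * t * cinner y y = cnj t * cinner y x"
    by (simp add: mult.assoc tyy)
  have "t * cinner x y = (cinner x y * cnj (cinner x y)) / complex_of_real ((norm y)\<^sup>2)"
    by (simp add: t_def cinner_commute[of y x] mult.commute)
  also have "\<dots> = complex_of_real ((cmod (cinner x y))\<^sup>2 / (norm y)\<^sup>2)"
    by (simp add: complex_norm_square[symmetric])
  finally have e3: "t * cinner x y = complex_of_real ((cmod (cinner x y))\<^sup>2 / (norm y)\<^sup>2)" .
  have "cinner (x - scaleC t y) (x - scaleC t y) = cinner x x - complex_of_real ((cmod (cinner x y))\<^sup>2 / (norm y)\<^sup>2)"
    using e1 e2 e3 by simp
  then have "(norm (x - scaleC t y))\<^sup>2 = Re (cinner x x) - (cmod (cinner x y))\<^sup>2 / (norm y)\<^sup>2"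
    by (simp only: norm_sq_cinner[of "x - scaleC t y"]) simp
  then have "0 \<le> (norm x)\<^sup>2 - (cmod (cinner x y))\<^sup>2 / (norm y)\<^sup>2"
    by (metis norm_sq_cinner zero_le_power2)
  then have "(cmod (cinner x y))\<^sup>2 \<le> (norm x)\<^sup>2 * (norm y)\<^sup>2"
    using ny by (simp add: field_simps)
  then have "(cmod (cinner x y))\<^sup>2 \<le> (norm x * norm y)\<^sup>2" by (simp add: power_mult_distrib)
  then show ?thesis by (rule power2_le_imp_le) simp
qed

lemma bounded_linear_cinner_right: "bounded_linear (cinner (x::'a::complex_inner))"
  by (rule bounded_linear_intro[where K="norm x"])
     (auto simp: cinner_add_right cinner_scaleR_right, metis cinner_cauchy_schwarz mult.commute)

lemma bounded_bilinear_cinner: "bounded_bilinear (cinner :: 'a::complex_inner \<Rightarrow> 'a \<Rightarrow> complex)"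
  by (rule bounded_bilinear.intro)
     (auto simp: cinner_add_right cinner_add_left cinner_scaleR_right cinner_scaleR_left
       intro!: exI[of _ 1] cinner_cauchy_schwarz)

lemma bounded_linear_scaleC_right: "bounded_linear (scaleC a :: 'a::complex_inner \<Rightarrow> 'a)"
  by (rule bounded_linear_intro[where K="cmod a"])
     (auto simp: scaleC_add_right scaleC_scaleR_comm)

lemma bounded_linear_scaleC_left: "bounded_linear (\<lambda>c. scaleC c (x::'a::complex_inner))"
  by (rule bounded_linear_intro[where K="norm x"])
     (auto simp: scaleC_add_left scaleR_scaleC scaleR_conv_of_real)

lemma cinner_eq_zero_imp: "(\<And>a. cinner a x = 0) \<Longrightarrow> (x::'a::complex_inner) = 0"
  by (metis cinner_self_eq_zero)

lemma cinner_ext: "(\<And>a. cinner a x = cinner a y) \<Longrightarrow> (x::'a::complex_inner) = y"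
  using cinner_eq_zero_imp[of "x - y"] by (simp add: cinner_diff_right)

lemma continuous_on_cinner[continuous_intros]:
  "continuous_on S f \<Longrightarrow> continuous_on S g \<Longrightarrow> continuous_on S (\<lambda>x. cinner (f x) (g x :: 'a::complex_inner))"
  by (rule bounded_bilinear.continuous_on[OF bounded_bilinear_cinner])

lemma tendsto_cinner[tendsto_intros]:
  "(f \<longlongrightarrow> a) F \<Longrightarrow> (g \<longlongrightarrow> b) F \<Longrightarrow> ((\<lambda>x. cinner (f x) (g x :: 'a::complex_inner)) \<longlongrightarrow> cinner a b) F"
  by (rule bounded_bilinear.tendsto[OF bounded_bilinear_cinner])

lemma continuous_on_scaleC[continuous_intros]:
  "continuous_on S f \<Longrightarrow> continuous_on S g \<Longrightarrow> continuous_on S (\<lambda>x. scaleC (f x) (g x :: 'a::complex_inner))"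
proof -
  have "bounded_bilinear (scaleC :: complex \<Rightarrow> 'a \<Rightarrow> 'a)"
    by (rule bounded_bilinear.intro)
       (auto simp: scaleC_add_right scaleC_add_left scaleC_scaleR_comm scaleR_scaleC scaleR_conv_of_real
         intro!: exI[of _ 1])
  then show "continuous_on S f \<Longrightarrow> continuous_on S g \<Longrightarrow> ?thesis"
    by (rule bounded_bilinear.continuous_on)
qed

section \<open>Orthonormal bases\<close>

lemma cnj_mult_self: "cnj z * z = complex_of_real ((cmod z)\<^sup>2)"
  by (metis complex_norm_square mult.commute)

lemma onb_norm: "is_onb B \<Longrightarrow> e \<in> B \<Longrightarrow> norm e = 1"
  by (simp add: is_onb_def)

lemma onb_cinner: "is_onb B \<Longrightarrow> e \<in> B \<Longrightarrow> f \<in> B \<Longrightarrow> cinner e f = (if e = f then 1 else 0)"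
  by (auto simp: is_onb_def cinner_self)

lemma onb_complete: "is_onb B \<Longrightarrow> (\<And>e. e \<in> B \<Longrightarrow> cinner e x = 0) \<Longrightarrow> x = 0"
  by (simp add: is_onb_def)

lemma onb_cinner_sum:
  assumes "is_onb B" "finite F" "F \<subseteq> B" "e0 \<in> B"
  shows "cinner e0 (\<Sum>e\<in>F. scaleC (c e) e) = (if e0 \<in> F then c e0 else 0)"
proof -
  have "cinner e0 (\<Sum>e\<in>F. scaleC (c e) e) = (\<Sum>e\<in>F. c e * (if e0 = e then 1 else 0))"
    using assms by (auto simp: cinner_sum_right cinner_scaleC_right onb_cinner intro!: sum.cong)
  also have "\<dots> = (\<Sum>e\<in>F. if e0 = e then c e else 0)"
    by (rule sum.cong) auto
  also have "\<dots> = (if e0 \<in> F then c e0 else 0)"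
    using assms(2) by (simp add: sum.delta)
  finally show ?thesis .
qed

lemma onb_norm_sum:
  assumes "is_onb B" "finite F" "F \<subseteq> B"
  shows "(norm (\<Sum>e\<in>F. scaleC (c e) e))\<^sup>2 = (\<Sum>e\<in>F. (cmod (c e))\<^sup>2)"
proof -
  let ?s = "\<Sum>e\<in>F. scaleC (c e) e"
  have "cinner ?s ?s = (\<Sum>e\<in>F. cnj (c e) * cinner e ?s)"
    by (simp add: cinner_sum_left cinner_scaleC_left)
  also have "\<dots> = (\<Sum>e\<in>F. cnj (c e) * c e)"
    by (intro sum.cong refl) (use assms onb_cinner_sum[OF assms] in auto)
  also have "\<dots> = (\<Sum>e\<in>F. complex_of_real ((cmod (c e))\<^sup>2))"
    by (simp add: cnj_mult_self)
  finally have "cinner ?s ?s = complex_of_real (\<Sum>e\<in>F. (cmod (c e))\<^sup>2)" by simp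
  then show ?thesis by (simp add: norm_sq_cinner)
qed

lemma bessel:
  assumes "is_onb B" "finite F" "F \<subseteq> B"
  shows "(\<Sum>e\<in>F. (cmod (cinner e x))\<^sup>2) \<le> (norm x)\<^sup>2"
proof -
  define s where "s = (\<Sum>e\<in>F. scaleC (cinner e x) e)"
  define S where "S = (\<Sum>e\<in>F. (cmod (cinner e x))\<^sup>2)"
  have ns: "(norm s)\<^sup>2 = S"
    unfolding s_def S_def using assms by (rule onb_norm_sum)
  have "cinner s x = (\<Sum>e\<in>F. cnj (cinner e x) * cinner e x)"
    by (simp add: s_def cinner_sum_left cinner_scaleC_left)
  also have "\<dots> = complex_of_real S"
    by (simp add: S_def cnj_mult_self)
  finally have sx: "cinner s x = complex_of_real S" .
  have xs: "cinner x s = complex_of_real S"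
    using sx by (simp add: cinner_commute[of x s])
  have "(norm (x + - s))\<^sup>2 = (norm x)\<^sup>2 + (norm (-s))\<^sup>2 + 2 * Re (cinner x (-s))"
    by (rule norm_add_sq)
  also have "\<dots> = (norm x)\<^sup>2 - S"
    using ns xs by (simp add: cinner_minus_right)
  finally have "0 \<le> (norm x)\<^sup>2 - S" by (metis zero_le_power2)
  then show ?thesis by (simp add: S_def)
qed

lemma coef_summable:
  assumes "is_onb B"
  shows "(\<lambda>e. (cmod (cinner e x))\<^sup>2) summable_on B"
  by (rule nonneg_bdd_above_summable_on) (auto intro!: bdd_aboveI[where M="(norm x)\<^sup>2"] bessel[OF assms])

lemma summable_on_cauchy_crit:
  fixes f :: "'b \<Rightarrow> 'a::banach"
  assumes crit: "\<And>\<epsilon>. \<epsilon> > 0 \<Longrightarrow> \<exists>F0. finite F0 \<and> F0 \<subseteq> A \<and>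
     (\<forall>G. finite G \<longrightarrow> G \<subseteq> A \<longrightarrow> G \<inter> F0 = {} \<longrightarrow> norm (sum f G) < \<epsilon>)"
  shows "f summable_on A"
proof -
  have "\<exists>P. eventually P (finite_subsets_at_top A) \<and>
              (\<forall>F F'. P F \<and> P F' \<longrightarrow> dist (sum f F) (sum f F') < e)" if "e > 0" for e
  proof -
    obtain F0 where F0: "finite F0" "F0 \<subseteq> A"
      "\<And>G. finite G \<Longrightarrow> G \<subseteq> A \<Longrightarrow> G \<inter> F0 = {} \<Longrightarrow> norm (sum f G) < e/2"
      using crit[of "e/2"] \<open>e > 0\<close> by auto
    define P where "P F \<longleftrightarrow> finite F \<and> F0 \<subseteq> F \<and> F \<subseteq> A" for F
    have ev: "eventually P (finite_subsets_at_top A)"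
      unfolding eventually_finite_subsets_at_top P_def using F0 by auto
    have "dist (sum f F) (sum f F') < e" if "P F" "P F'" for F F'
    proof -
      have sF: "sum f F = sum f F0 + sum f (F - F0)"
        using that(1) unfolding P_def by (metis add.commute sum.subset_diff)
      have sF': "sum f F' = sum f F0 + sum f (F' - F0)"
        using that(2) unfolding P_def by (metis add.commute sum.subset_diff)
      have "dist (sum f F) (sum f F') = norm (sum f (F - F0) - sum f (F' - F0))"
        by (simp add: dist_norm sF sF')
      also have "\<dots> \<le> norm (sum f (F - F0)) + norm (sum f (F' - F0))"
        by (rule norm_triangle_ineq4)
      also have "\<dots> < e/2 + e/2"
        using that unfolding P_def by (intro add_strict_mono F0(3)) auto
      finally show ?thesis by simp
    qed
    then show ?thesis using ev by blast
  qed
  then have "cauchy_filter (filtermap (sum f) (finite_subsets_at_top A))"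
    by (simp add: cauchy_filter_metric_filtermap)
  moreover have "complete (UNIV::'a set)"
    by (meson Cauchy_convergent UNIV_I complete_def convergent_def)
  ultimately obtain L' where "(sum f \<longlongrightarrow> L') (finite_subsets_at_top A)"
    using complete_uniform[where S=UNIV] by (force simp add: filterlim_def)
  then show ?thesis
    using summable_on_def has_sum_def by blast
qed

lemma onb_expansion:
  fixes x :: "'a::{complex_inner,banach}"
  assumes onb: "is_onb B"
  shows "((\<lambda>e. scaleC (cinner e x) e) has_sum x) B"
proof -
  define c where "c e = cinner e x" for e
  define S where "S = infsum (\<lambda>e. (cmod (c e))\<^sup>2) B"
  have hs: "((\<lambda>e. (cmod (c e))\<^sup>2) has_sum S) B"
    unfolding S_def c_def using coef_summable[OF onb] by (simp add: summable_iff_has_sum_infsum[symmetric])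
  have "(\<lambda>e. scaleC (c e) e) summable_on B"
  proof (rule summable_on_cauchy_crit)
    fix \<epsilon> :: real assume "\<epsilon> > 0"
    then have "\<epsilon>\<^sup>2 > 0" by simp
    from hs have "eventually (\<lambda>F. dist (sum (\<lambda>e. (cmod (c e))\<^sup>2) F) S < \<epsilon>\<^sup>2) (finite_subsets_at_top B)"
      unfolding has_sum_def using \<open>\<epsilon>\<^sup>2 > 0\<close> by (rule tendstoD)
    then obtain F0 where F0': "finite F0 \<and> F0 \<subseteq> B \<and>
      (\<forall>Y. finite Y \<and> F0 \<subseteq> Y \<and> Y \<subseteq> B \<longrightarrow> dist (sum (\<lambda>e. (cmod (c e))\<^sup>2) Y) S < \<epsilon>\<^sup>2)"
      unfolding eventually_finite_subsets_at_top by (elim exE)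
    then have F0: "finite F0" "F0 \<subseteq> B"
      "\<And>Y. finite Y \<Longrightarrow> F0 \<subseteq> Y \<Longrightarrow> Y \<subseteq> B \<Longrightarrow> dist (sum (\<lambda>e. (cmod (c e))\<^sup>2) Y) S < \<epsilon>\<^sup>2"
      by auto
    have "norm (sum (\<lambda>e. scaleC (c e) e) G) < \<epsilon>" if G: "finite G" "G \<subseteq> B" "G \<inter> F0 = {}" for G
    proof -
      have le: "sum (\<lambda>e. (cmod (c e))\<^sup>2) (F0 \<union> G) \<le> S"
        unfolding S_def using F0 G coef_summable[OF onb, of x] unfolding c_def
        by (intro finite_sum_le_infsum) auto
      have "dist (sum (\<lambda>e. (cmod (c e))\<^sup>2) F0) S < \<epsilon>\<^sup>2"
        using F0 by auto
      moreover have "sum (\<lambda>e. (cmod (c e))\<^sup>2) (F0 \<union> G) = sum (\<lambda>e. (cmod (c e))\<^sup>2) F0 + sum (\<lambda>e. (cmod (c e))\<^sup>2) G"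
        using F0 G by (simp add: sum.union_disjoint inf_commute)
      ultimately have "sum (\<lambda>e. (cmod (c e))\<^sup>2) G < \<epsilon>\<^sup>2"
        using le by (auto simp: dist_real_def)
      moreover have "(norm (sum (\<lambda>e. scaleC (c e) e) G))\<^sup>2 = sum (\<lambda>e. (cmod (c e))\<^sup>2) G"
        using onb G(1,2) by (rule onb_norm_sum)
      ultimately have "(norm (sum (\<lambda>e. scaleC (c e) e) G))\<^sup>2 < \<epsilon>\<^sup>2" by simp
      then show ?thesis using \<open>\<epsilon> > 0\<close> by (simp add: power_less_imp_less_base)
    qed
    then show "\<exists>F0. finite F0 \<and> F0 \<subseteq> B \<and>
     (\<forall>G. finite G \<longrightarrow> G \<subseteq> B \<longrightarrow> G \<inter> F0 = {} \<longrightarrow> norm (sum (\<lambda>e. scaleC (c e) e) G) < \<epsilon>)"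
      using F0 by blast
  qed
  then obtain y where y: "((\<lambda>e. scaleC (c e) e) has_sum y) B"
    by (auto simp: summable_on_def)
  have "cinner e0 y = cinner e0 x" if e0: "e0 \<in> B" for e0
  proof -
    have "((\<lambda>e. cinner e0 (scaleC (c e) e)) has_sum cinner e0 y) B"
      by (rule has_sum_bounded_linear[OF bounded_linear_cinner_right y])
    moreover have "((\<lambda>e. cinner e0 (scaleC (c e) e)) has_sum c e0) B"
      using e0 onb by (intro has_sum_finite_neutralI[of "{e0}"]) (auto simp: cinner_scaleC_right onb_cinner)
    ultimately have "cinner e0 y = c e0" by (rule has_sum_unique)
    then show ?thesis by (simp add: c_def)
  qed
  then have "x - y = 0"
    using onb by (intro onb_complete[OF onb]) (auto simp: cinner_diff_right)
  then show ?thesis using y by (simp add: c_def)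
qed

lemma parseval:
  fixes x :: "'a::{complex_inner,banach}"
  assumes onb: "is_onb B"
  shows "((\<lambda>e. (cmod (cinner e x))\<^sup>2) has_sum (norm x)\<^sup>2) B"
proof -
  have "((\<lambda>e. cinner x (scaleC (cinner e x) e)) has_sum cinner x x) B"
    by (rule has_sum_bounded_linear[OF bounded_linear_cinner_right onb_expansion[OF onb]])
  moreover have "cinner x (scaleC (cinner e x) e) = complex_of_real ((cmod (cinner e x))\<^sup>2)" for e
  proof -
    have "cinner x (scaleC (cinner e x) e) = cnj (cinner e x) * cinner e x"
      by (simp add: cinner_scaleC_right cinner_commute[of x e] mult.commute)
    then show ?thesis by (simp only: cnj_mult_self)
  qed
  ultimately have "((\<lambda>e. complex_of_real ((cmod (cinner e x))\<^sup>2)) has_sum complex_of_real ((norm x)\<^sup>2)) B"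
    by (simp add: cinner_self)
  then show ?thesis by (simp only: has_sum_of_real_iff)
qed

lemma bounded_clinearD:
  "bounded_clinear T \<Longrightarrow> bounded_linear T"
  "bounded_clinear T \<Longrightarrow> T (scaleC c x) = scaleC c (T x)"
  by (auto simp: bounded_clinear_def)

lemma onb_expansion_T:
  fixes v :: "'a::{complex_inner,banach}"
  assumes onb: "is_onb B" and T: "bounded_clinear (T :: 'a \<Rightarrow> 'a)"
  shows "((\<lambda>e. cinner e v * cinner f (T e)) has_sum cinner f (T v)) B"
proof -
  have "((\<lambda>e. T (scaleC (cinner e v) e)) has_sum T v) B"
    by (rule has_sum_bounded_linear[OF bounded_clinearD(1)[OF T] onb_expansion[OF onb]])
  then have "((\<lambda>e. cinner f (T (scaleC (cinner e v) e))) has_sum cinner f (T v)) B"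
    by (rule has_sum_bounded_linear[OF bounded_linear_cinner_right])
  then show ?thesis
    by (simp add: bounded_clinearD(2)[OF T] cinner_scaleC_right)
qed


section \<open>Hilbert--Schmidt estimates\<close>

lemma cs_infsum:
  fixes a b :: "'b \<Rightarrow> real"
  assumes a0: "\<And>x. x \<in> A \<Longrightarrow> a x \<ge> 0" and b0: "\<And>x. x \<in> A \<Longrightarrow> b x \<ge> 0"
    and sa: "(\<lambda>x. (a x)\<^sup>2) summable_on A" and sb: "(\<lambda>x. (b x)\<^sup>2) summable_on A"
  shows "(\<lambda>x. a x * b x) summable_on A"
    and "infsum (\<lambda>x. a x * b x) A \<le> sqrt (infsum (\<lambda>x. (a x)\<^sup>2) A) * sqrt (infsum (\<lambda>x. (b x)\<^sup>2) A)"
proof -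
  have s2: "(\<lambda>x. ((a x)\<^sup>2 + (b x)\<^sup>2) / 2) summable_on A"
    using summable_on_cmult_left[OF summable_on_add[OF sa sb], of "1/2"] by simp
  have "a x * b x \<le> ((a x)\<^sup>2 + (b x)\<^sup>2) / 2" for x
    using sum_squares_bound[of "a x" "b x"] by (simp add: power2_eq_square)
  then show sab: "(\<lambda>x. a x * b x) summable_on A"
    by (intro summable_on_comparison_test[OF s2]) (auto simp: a0 b0)
  show "infsum (\<lambda>x. a x * b x) A \<le> sqrt (infsum (\<lambda>x. (a x)\<^sup>2) A) * sqrt (infsum (\<lambda>x. (b x)\<^sup>2) A)"
  proof (rule infsum_le_finite_sums[OF sab])
    fix F assume F: "finite F" "F \<subseteq> A"
    have "(\<Sum>x\<in>F. a x * b x) = (\<Sum>x\<in>F. \<bar>a x\<bar> * \<bar>b x\<bar>)"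
      using F a0 b0 by (intro sum.cong) auto
    also have "\<dots> \<le> L2_set a F * L2_set b F" by (rule L2_set_mult_ineq)
    also have "\<dots> \<le> sqrt (infsum (\<lambda>x. (a x)\<^sup>2) A) * sqrt (infsum (\<lambda>x. (b x)\<^sup>2) A)"
      unfolding L2_set_def
      by (intro mult_mono real_sqrt_le_mono finite_sum_le_infsum sa sb F) (auto intro!: infsum_nonneg sum_nonneg)
    finally show "(\<Sum>x\<in>F. a x * b x) \<le> sqrt (infsum (\<lambda>x. (a x)\<^sup>2) A) * sqrt (infsum (\<lambda>x. (b x)\<^sup>2) A)" .
  qed
qed

lemma functional_bound:
  fixes T :: "'a::{complex_inner,banach} \<Rightarrow> 'a"
  assumes onb: "is_onb B" and T: "bounded_clinear T"
    and s: "(\<lambda>g. (cmod (cinner f (T g)))\<^sup>2) summable_on B"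
  shows "cmod (cinner f (T v)) \<le> norm v * sqrt (infsum (\<lambda>g. (cmod (cinner f (T g)))\<^sup>2) B)"
proof -
  have cs: "(\<lambda>e. cmod (cinner e v) * cmod (cinner f (T e))) summable_on B"
    "infsum (\<lambda>e. cmod (cinner e v) * cmod (cinner f (T e))) B
      \<le> sqrt (infsum (\<lambda>e. (cmod (cinner e v))\<^sup>2) B) * sqrt (infsum (\<lambda>g. (cmod (cinner f (T g)))\<^sup>2) B)"
    using cs_infsum[of B "\<lambda>e. cmod (cinner e v)" "\<lambda>e. cmod (cinner f (T e))"] coef_summable[OF onb] s
    by auto
  have "cmod (cinner f (T v)) \<le> infsum (\<lambda>e. cmod (cinner e v) * cmod (cinner f (T e))) B"
    by (rule norm_infsum_le[OF onb_expansion_T[OF onb T] has_sum_infsum[OF cs(1)]])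
       (simp add: norm_mult)
  also have "\<dots> \<le> sqrt (infsum (\<lambda>e. (cmod (cinner e v))\<^sup>2) B) * sqrt (infsum (\<lambda>g. (cmod (cinner f (T g)))\<^sup>2) B)"
    by (rule cs(2))
  also have "infsum (\<lambda>e. (cmod (cinner e v))\<^sup>2) B = (norm v)\<^sup>2"
    using parseval[OF onb] by (rule infsumI)
  finally show ?thesis by simp
qed

lemma op_bound:
  fixes T :: "'a::{complex_inner,banach} \<Rightarrow> 'a"
  assumes onb: "is_onb B" and T: "bounded_clinear T"
    and s: "(\<lambda>e. (norm (T e))\<^sup>2) summable_on B"
  shows "norm (T h) \<le> sqrt (infsum (\<lambda>e. (norm (T e))\<^sup>2) B) * norm h"
proof (cases "T h = 0")
  case True then show ?thesis by (auto intro!: mult_nonneg_nonneg infsum_nonneg)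
next
  case False
  define C where "C = infsum (\<lambda>e. (norm (T e))\<^sup>2) B"
  have C0: "C \<ge> 0" unfolding C_def by (rule infsum_nonneg) auto
  have bnd: "(cmod (cinner (T h) (T g)))\<^sup>2 \<le> (norm (T h))\<^sup>2 * (norm (T g))\<^sup>2" for g
    by (metis cinner_cauchy_schwarz norm_ge_zero power_mono power_mult_distrib)
  have s2: "(\<lambda>g. (cmod (cinner (T h) (T g)))\<^sup>2) summable_on B"
    by (rule summable_on_comparison_test[OF summable_on_cmult_right[OF s, of "(norm (T h))\<^sup>2"]])
       (use bnd in auto)
  have "infsum (\<lambda>g. (cmod (cinner (T h) (T g)))\<^sup>2) B \<le> infsum (\<lambda>g. (norm (T h))\<^sup>2 * (norm (T g))\<^sup>2) B"
    by (rule infsum_mono[OF s2 summable_on_cmult_right[OF s]]) (rule bnd)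
  also have "\<dots> = (norm (T h))\<^sup>2 * C"
    unfolding C_def by (rule infsum_cmult_right[OF s])
  finally have le1: "infsum (\<lambda>g. (cmod (cinner (T h) (T g)))\<^sup>2) B \<le> (norm (T h))\<^sup>2 * C" .
  have "(norm (T h))\<^sup>2 = cmod (cinner (T h) (T h))"
    unfolding cinner_self norm_of_real by simp
  also have "\<dots> \<le> norm h * sqrt (infsum (\<lambda>g. (cmod (cinner (T h) (T g)))\<^sup>2) B)"
    by (rule functional_bound[OF onb T s2])
  also have "\<dots> \<le> norm h * sqrt ((norm (T h))\<^sup>2 * C)"
    by (intro mult_left_mono real_sqrt_le_mono le1) auto
  also have "\<dots> = norm h * (norm (T h) * sqrt C)"
    by (simp add: real_sqrt_mult)
  finally have "norm (T h) * norm (T h) \<le> norm (T h) * (sqrt C * norm h)"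
    by (simp add: power2_eq_square algebra_simps)
  then have "norm (T h) \<le> sqrt C * norm h"
    using False by (simp add: mult_le_cancel_left)
  then show ?thesis by (simp add: C_def)
qed

lemma has_sum_finite_sum:
  fixes f :: "'i \<Rightarrow> 'b \<Rightarrow> 'c::topological_comm_monoid_add"
  assumes "finite I" "\<And>i. i \<in> I \<Longrightarrow> (f i has_sum s i) A"
  shows "((\<lambda>x. \<Sum>i\<in>I. f i x) has_sum (\<Sum>i\<in>I. s i)) A"
  using assms by (induction I rule: finite_induct) (auto intro!: has_sum_add)

lemma basis_indep:
  fixes T :: "'a::{complex_inner,banach} \<Rightarrow> 'a"
  assumes B1: "is_onb B1" and B0: "is_onb B0" and T: "bounded_clinear T"
    and s: "(\<lambda>e. (norm (T e))\<^sup>2) summable_on B1"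
  shows "(\<lambda>e. (norm (T e))\<^sup>2) summable_on B0"
proof -
  define a where "a f g = (cmod (cinner f (T g)))\<^sup>2" for f g
  define C where "C = infsum (\<lambda>e. (norm (T e))\<^sup>2) B1"
  have a0: "a f g \<ge> 0" for f g by (simp add: a_def)
  have par: "((\<lambda>f. a f g) has_sum (norm (T g))\<^sup>2) B1" for g
    unfolding a_def by (rule parseval[OF B1])
  have ag: "a f g \<le> (norm f)\<^sup>2 * (norm (T g))\<^sup>2" for f g
    unfolding a_def by (metis cinner_cauchy_schwarz norm_ge_zero power_mono power_mult_distrib)
  have sg: "(\<lambda>g. a f g) summable_on B1" for f
    by (rule summable_on_comparison_test[OF summable_on_cmult_right[OF s, of "(norm f)\<^sup>2"]])
       (use ag a0 in auto)
  define D where "D f = infsum (\<lambda>g. a f g) B1" for f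
  have finD: "(\<Sum>f\<in>F1. D f) \<le> C" if "finite F1" "F1 \<subseteq> B1" for F1
  proof -
    have "(\<Sum>f\<in>F1. D f) = infsum (\<lambda>g. \<Sum>f\<in>F1. a f g) B1"
      unfolding D_def
      by (rule infsumI[symmetric], rule has_sum_finite_sum[OF that(1)]) (use sg in auto)
    also have "\<dots> \<le> infsum (\<lambda>g. (norm (T g))\<^sup>2) B1"
    proof (rule infsum_mono)
      show "(\<lambda>g. \<Sum>f\<in>F1. a f g) summable_on B1"
        using has_sum_finite_sum[OF that(1), of "\<lambda>f g. a f g"] sg
        by (meson has_sum_infsum summable_on_def)
      show "(\<lambda>g. (norm (T g))\<^sup>2) summable_on B1" by (rule s)
      fix g
      show "(\<Sum>f\<in>F1. a f g) \<le> (norm (T g))\<^sup>2"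
        using finite_sum_le_has_sum[OF par that] a0 by auto
    qed
    finally show ?thesis by (simp add: C_def)
  qed
  have D0: "D f \<ge> 0" for f unfolding D_def by (rule infsum_nonneg) (simp add: a0)
  have sD: "D summable_on B1"
    by (rule nonneg_bdd_above_summable_on) (auto intro!: bdd_aboveI[where M=C] finD D0)
  have iD: "infsum D B1 \<le> C"
    by (rule infsum_le_finite_sums[OF sD]) (rule finD)
  have EleD: "(\<Sum>e\<in>F. a f e) \<le> D f" if F: "finite F" "F \<subseteq> B0" for F f
  proof -
    define v where "v = (\<Sum>e\<in>F. scaleC (cinner (T e) f) e)"
    define E where "E = (\<Sum>e\<in>F. a f e)"
    have E0: "E \<ge> 0" unfolding E_def by (intro sum_nonneg a0)
    have lin: "linear T" using bounded_clinearD(1)[OF T] bounded_linear.linear by blast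
    have Tv: "T v = (\<Sum>e\<in>F. scaleC (cinner (T e) f) (T e))"
      unfolding v_def by (simp add: linear_sum[OF lin] bounded_clinearD(2)[OF T])
    have "cinner f (T v) = (\<Sum>e\<in>F. cinner (T e) f * cinner f (T e))"
      by (simp add: Tv cinner_sum_right cinner_scaleC_right)
    also have "\<dots> = (\<Sum>e\<in>F. complex_of_real (a f e))"
      by (intro sum.cong refl) (simp add: a_def cinner_commute[of "T _" f] cnj_mult_self)
    finally have fTv: "cinner f (T v) = complex_of_real E" by (simp add: E_def)
    have "(norm v)\<^sup>2 = (\<Sum>e\<in>F. (cmod (cinner (T e) f))\<^sup>2)"
      unfolding v_def using B0 F by (rule onb_norm_sum)
    also have "\<dots> = E"
      unfolding E_def a_def by (intro sum.cong refl) (metis cinner_commute complex_mod_cnj)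
    finally have nv: "norm v = sqrt E" by (metis norm_ge_zero real_sqrt_unique)
    have "E = cmod (cinner f (T v))" using fTv E0 by simp
    also have "\<dots> \<le> norm v * sqrt (D f)"
      unfolding D_def a_def by (rule functional_bound[OF B1 T]) (use sg in \<open>simp add: a_def\<close>)
    finally have "sqrt E * sqrt E \<le> sqrt E * sqrt (D f)"
      using nv E0 by simp
    then have "E \<le> D f"
      by (metis D0 E0 mult_le_cancel_left_pos not_le real_sqrt_ge_zero real_sqrt_le_iff
          real_sqrt_mult_self order_le_less)
    then show ?thesis by (simp add: E_def)
  qed
  show ?thesis
  proof (rule nonneg_bdd_above_summable_on)
    show "\<And>x. x \<in> B0 \<Longrightarrow> 0 \<le> (norm (T x))\<^sup>2" by simp
    show "bdd_above (sum (\<lambda>e. (norm (T e))\<^sup>2) ` {F. F \<subseteq> B0 \<and> finite F})"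
    proof (rule bdd_aboveI[where M=C], clarsimp)
      fix F assume F: "F \<subseteq> B0" "finite F"
      have "(\<Sum>e\<in>F. (norm (T e))\<^sup>2) = infsum (\<lambda>f. \<Sum>e\<in>F. a f e) B1"
        by (rule infsumI[symmetric], rule has_sum_finite_sum[OF F(2)]) (rule par)
      also have "\<dots> \<le> infsum D B1"
      proof (rule infsum_mono[OF _ sD])
        show "(\<lambda>f. \<Sum>e\<in>F. a f e) summable_on B1"
          using has_sum_finite_sum[OF F(2), where f="\<lambda>e f. a f e" and s="\<lambda>e. (norm (T e))\<^sup>2" and A=B1]
            par
          by (meson summable_on_def)
        show "\<And>f. f \<in> B1 \<Longrightarrow> (\<Sum>e\<in>F. a f e) \<le> D f"
          using EleD F by auto
      qed
      also have "\<dots> \<le> C" by (rule iD)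
      finally show "(\<Sum>e\<in>F. (norm (T e))\<^sup>2) \<le> C" .
    qed
  qed
qed

section \<open>The Hilbert--Schmidt class with respect to the fixed basis\<close>

definition onb0 :: "'a::complex_inner set" where "onb0 = (SOME B. is_onb B)"

definition hsB :: "('a::{complex_inner,banach} \<Rightarrow> 'a) \<Rightarrow> bool" where
  "hsB T \<longleftrightarrow> bounded_clinear T \<and> (\<lambda>e. (norm (T e))\<^sup>2) summable_on onb0"

lemma onb0: "\<exists>B::'a set. is_onb B \<Longrightarrow> is_onb (onb0::'a::complex_inner set)"
  unfolding onb0_def by (rule someI_ex)

lemma hs_norm_onb0: "hs_norm T = sqrt (infsum (\<lambda>e. (norm (T e))\<^sup>2) onb0)"
  unfolding hs_norm_def onb0_def ..

lemma hs_imp_hsB: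
  fixes T :: "'a::{complex_inner,banach} \<Rightarrow> 'a"
  assumes "hilbert_schmidt T" shows "hsB T"
proof -
  obtain B where B: "is_onb B" "(\<lambda>e. (norm (T e))\<^sup>2) summable_on B" and T: "bounded_clinear T"
    using assms unfolding hilbert_schmidt_def by blast
  have "is_onb (onb0::'a set)" using B by (intro onb0) blast
  then show ?thesis unfolding hsB_def using basis_indep[OF B(1) _ T B(2)] T by blast
qed

lemma hs_imp_ex_onb: "hilbert_schmidt (T::'a::complex_inner \<Rightarrow> 'a) \<Longrightarrow> \<exists>B::'a set. is_onb B"
  unfolding hilbert_schmidt_def by blast

lemma hsB_op:
  fixes T :: "'a::{complex_inner,banach} \<Rightarrow> 'a"
  assumes "hsB T" "\<exists>B::'a set. is_onb B"
  shows "norm (T h) \<le> hs_norm T * norm h"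
  using op_bound[OF onb0[OF assms(2)], of T h] assms(1) unfolding hsB_def hs_norm_onb0 by blast

lemma hsB_op_small:
  fixes T :: "'a::{complex_inner,banach} \<Rightarrow> 'a"
  assumes "hsB T" "\<exists>B::'a set. is_onb B" "hs_norm T \<le> \<epsilon>"
  shows "norm (T h) \<le> \<epsilon> * norm h"
  using hsB_op[OF assms(1,2), of h] assms(3) by (meson mult_right_mono norm_ge_zero order_trans)

lemma bcl_diff: "bounded_clinear A \<Longrightarrow> bounded_clinear B \<Longrightarrow> bounded_clinear (\<lambda>h. A h - B h)"
  unfolding bounded_clinear_def by (auto intro: bounded_linear_sub simp: scaleC_diff_right)

lemma bcl_add: "bounded_clinear A \<Longrightarrow> bounded_clinear B \<Longrightarrow> bounded_clinear (\<lambda>h. A h + B h)"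
  unfolding bounded_clinear_def by (auto intro: bounded_linear_add simp: scaleC_add_right)

lemma bcl_zero: "bounded_clinear (\<lambda>h. 0)"
  unfolding bounded_clinear_def by auto

lemma bcl_scale: "bounded_clinear A \<Longrightarrow> bounded_clinear (\<lambda>h. scaleC c (A h))"
  unfolding bounded_clinear_def
  by (auto intro: bounded_linear_compose[OF bounded_linear_scaleC_right] simp: scaleC_scaleC mult.commute)

lemma bcl_rank1: "bounded_clinear (rank1 a b)"
  unfolding bounded_clinear_def rank1_def
  by (auto intro: bounded_linear_compose[OF bounded_linear_scaleC_left bounded_linear_cinner_right]
      simp: scaleC_scaleC cinner_scaleC_right)

lemma norm_diff_sq_le: "(norm (x - y))\<^sup>2 \<le> 2 * (norm x)\<^sup>2 + 2 * (norm (y::'a::real_normed_vector))\<^sup>2"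
proof -
  have "norm (x - y) \<le> norm x + norm y" by (rule norm_triangle_ineq4)
  then have "(norm (x - y))\<^sup>2 \<le> (norm x + norm y)\<^sup>2" by (simp add: power_mono)
  also have "\<dots> \<le> 2 * (norm x)\<^sup>2 + 2 * (norm y)\<^sup>2"
    using sum_squares_bound[of "norm x" "norm y"] by (simp add: power2_eq_square algebra_simps)
  finally show ?thesis .
qed

lemma norm_add_sq_le: "(norm (x + y))\<^sup>2 \<le> 2 * (norm x)\<^sup>2 + 2 * (norm (y::'a::real_normed_vector))\<^sup>2"
  using norm_diff_sq_le[of x "-y"] by simp

lemma hsB_diff:
  assumes "hsB A" "hsB B" shows "hsB (\<lambda>h. A h - B h)"
proof -
  have s: "(\<lambda>e. 2 * (norm (A e))\<^sup>2 + 2 * (norm (B e))\<^sup>2) summable_on onb0"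
    using assms unfolding hsB_def by (intro summable_on_add summable_on_cmult_right) auto
  have "(\<lambda>e. (norm (A e - B e))\<^sup>2) summable_on onb0"
    by (rule summable_on_comparison_test[OF s]) (simp_all only: norm_diff_sq_le zero_le_power2)
  then show ?thesis using assms unfolding hsB_def by (simp add: bcl_diff)
qed

lemma hsB_add:
  assumes "hsB A" "hsB B" shows "hsB (\<lambda>h. A h + B h)"
proof -
  have s: "(\<lambda>e. 2 * (norm (A e))\<^sup>2 + 2 * (norm (B e))\<^sup>2) summable_on onb0"
    using assms unfolding hsB_def by (intro summable_on_add summable_on_cmult_right) auto
  have "(\<lambda>e. (norm (A e + B e))\<^sup>2) summable_on onb0"
    by (rule summable_on_comparison_test[OF s]) (simp_all only: norm_add_sq_le zero_le_power2)
  then show ?thesis using assms unfolding hsB_def by (simp add: bcl_add)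
qed

lemma hsB_zero: "hsB (\<lambda>h. 0)"
  unfolding hsB_def by (auto intro: bcl_zero)

lemma hsB_scale:
  assumes "hsB A" shows "hsB (\<lambda>h. scaleC c (A h))"
proof -
  have "(\<lambda>e. (cmod c)\<^sup>2 * (norm (A e))\<^sup>2) summable_on onb0"
    using assms unfolding hsB_def by (intro summable_on_cmult_right) auto
  moreover have "(norm (scaleC c (A e)))\<^sup>2 = (cmod c)\<^sup>2 * (norm (A e))\<^sup>2" for e
    by (simp add: power_mult_distrib)
  ultimately show ?thesis using assms unfolding hsB_def by (simp add: bcl_scale)
qed

lemma hsB_sum: "finite I \<Longrightarrow> (\<And>i. i \<in> I \<Longrightarrow> hsB (A i)) \<Longrightarrow> hsB (\<lambda>h. \<Sum>i\<in>I. A i h)"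
  by (induction I rule: finite_induct) (auto intro: hsB_zero hsB_add)

lemma hsB_rank1:
  assumes "\<exists>B::'a set. is_onb B"
  shows "hsB (rank1 a (b::'a::{complex_inner,banach}))"
proof -
  have "(\<lambda>e. (cmod (cinner b e))\<^sup>2) summable_on onb0"
    using coef_summable[OF onb0[OF assms], of b] by (simp add: cinner_commute[of b])
  then have "(\<lambda>e. (cmod (cinner b e))\<^sup>2 * (norm a)\<^sup>2) summable_on onb0"
    by (rule summable_on_cmult_left)
  moreover have "(norm (rank1 a b e))\<^sup>2 = (cmod (cinner b e))\<^sup>2 * (norm a)\<^sup>2" for e
    by (simp add: rank1_def power_mult_distrib)
  ultimately show ?thesis unfolding hsB_def using bcl_rank1 by simp
qed

section \<open>Measure-theoretic preliminaries\<close>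

lemma compact_sets_lebesgue: "compact X \<Longrightarrow> X \<in> sets lebesgue"
  using lmeasurable_compact fmeasurableD by blast

lemma fm_on: "compact X \<Longrightarrow> finite_measure (lebesgue_on X)"
  by (simp add: finite_measure_lebesgue_on lmeasurable_compact)

lemma meas_borel:
  assumes "f \<in> borel_measurable borel"
  shows "f \<in> borel_measurable (lebesgue_on X)"
proof -
  have "f \<in> borel_measurable lborel"
    using assms by (simp add: measurable_cong_sets[OF sets_lborel refl])
  then have "f \<in> borel_measurable lebesgue" by (rule measurable_completion)
  then show ?thesis by (rule measurable_restrict_space1)
qed

lemma int_bnd:
  fixes f :: "'a::euclidean_space \<Rightarrow> 'b::{banach,second_countable_topology}"
  assumes "compact X" "f \<in> borel_measurable (lebesgue_on X)" "\<And>x. x \<in> X \<Longrightarrow> norm (f x) \<le> B"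
  shows "integrable (lebesgue_on X) f"
  by (rule finite_measure.integrable_const_bound[OF fm_on[OF assms(1)], where B=B])
     (use assms in auto)

lemma cont_meas:
  "compact X \<Longrightarrow> continuous_on X f \<Longrightarrow> f \<in> borel_measurable (lebesgue_on X)"
  by (rule continuous_imp_measurable_on_sets_lebesgue) (auto simp: compact_sets_lebesgue)

lemma cont_bnd:
  fixes f :: "'a::metric_space \<Rightarrow> 'b::real_normed_vector"
  assumes "compact X" "continuous_on X f"
  shows "\<exists>B. \<forall>x\<in>X. norm (f x) \<le> B"
proof -
  have "bounded (f ` X)" using compact_continuous_image[OF assms(2,1)] by (rule compact_imp_bounded)
  then show ?thesis unfolding bounded_iff by blast
qed

lemma cont_int:
  fixes f :: "'a::euclidean_space \<Rightarrow> 'b::{banach,second_countable_topology}"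
  assumes "compact X" "continuous_on X f"
  shows "integrable (lebesgue_on X) f"
proof -
  obtain B where "\<And>x. x \<in> X \<Longrightarrow> norm (f x) \<le> B" using cont_bnd[OF assms] by blast
  then show ?thesis using int_bnd[OF assms(1) cont_meas[OF assms]] by blast
qed

lemma cont_L2:
  fixes f :: "'a::euclidean_space \<Rightarrow> 'h::{complex_inner,banach,second_countable_topology}"
  assumes "compact X" "continuous_on X f"
  shows "f \<in> L2 X"
proof -
  have "continuous_on X (\<lambda>x. (norm (f x))\<^sup>2)" by (intro continuous_intros assms(2))
  then show ?thesis unfolding L2_def
    using cont_meas[OF assms] cont_int[OF assms(1), of "\<lambda>x. (norm (f x))\<^sup>2"] by auto
qed

lemma L2_meas: "f \<in> L2 X \<Longrightarrow> f \<in> borel_measurable (lebesgue_on X)"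
  by (simp add: L2_def)

lemma L2_sq_int: "f \<in> L2 X \<Longrightarrow> integrable (lebesgue_on X) (\<lambda>x. (norm (f x))\<^sup>2)"
  by (simp add: L2_def)

lemma L2_norm_int:
  assumes "compact X" "f \<in> L2 X"
  shows "integrable (lebesgue_on X) (\<lambda>x. norm (f x))"
proof (rule Bochner_Integration.integrable_bound)
  interpret finite_measure "lebesgue_on X" using fm_on[OF assms(1)] .
  show "integrable (lebesgue_on X) (\<lambda>x. 1 + (norm (f x))\<^sup>2)"
    using L2_sq_int[OF assms(2)] by auto
  show "(\<lambda>x. norm (f x)) \<in> borel_measurable (lebesgue_on X)"
    using L2_meas[OF assms(2)] by measurable
  have "t \<le> 1 + t\<^sup>2" for t :: real
  proof -
    have a: "0 \<le> t\<^sup>2" by simp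
    have b: "2*t \<le> t\<^sup>2 + 1" using sum_squares_bound[of t 1] by simp
    from a b show ?thesis by linarith
  qed
  then show "AE x in lebesgue_on X. norm (norm (f x)) \<le> norm (1 + (norm (f x))\<^sup>2)"
    by (auto intro!: AE_I2)
qed

lemma cinner_meas[measurable]:
  fixes f g :: "'b \<Rightarrow> 'h::{complex_inner,second_countable_topology}"
  assumes [measurable]: "f \<in> borel_measurable M" "g \<in> borel_measurable M"
  shows "(\<lambda>x. cinner (f x) (g x)) \<in> borel_measurable M"
proof (rule borel_measurable_continuous_Pair[OF assms])
  show "continuous_on UNIV (\<lambda>x. cinner (fst x) (snd x :: 'h))"
    by (intro continuous_on_cinner continuous_on_fst continuous_on_snd continuous_on_id)
qed

lemma prod_le_sq_sum: "a \<ge> 0 \<Longrightarrow> b \<ge> 0 \<Longrightarrow> a * b \<le> a\<^sup>2 + (b::real)\<^sup>2"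
proof -
  assume "a \<ge> 0" "b \<ge> 0"
  then have "a * b \<ge> 0" by simp
  moreover have "2 * a * b \<le> a\<^sup>2 + b\<^sup>2" by (rule sum_squares_bound)
  ultimately show ?thesis by linarith
qed

lemma cinner_int:
  fixes f g :: "'a::euclidean_space \<Rightarrow> 'h::{complex_inner,banach,second_countable_topology}"
  assumes "f \<in> L2 X" "g \<in> L2 X"
  shows "integrable (lebesgue_on X) (\<lambda>x. cinner (f x) (g x))"
proof (rule Bochner_Integration.integrable_bound)
  show "integrable (lebesgue_on X) (\<lambda>x. (norm (f x))\<^sup>2 + (norm (g x))\<^sup>2)"
    using L2_sq_int[OF assms(1)] L2_sq_int[OF assms(2)] by auto
  show "(\<lambda>x. cinner (f x) (g x)) \<in> borel_measurable (lebesgue_on X)"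
    using L2_meas[OF assms(1)] L2_meas[OF assms(2)] by (rule cinner_meas)
  show "AE x in lebesgue_on X. norm (cinner (f x) (g x)) \<le> norm ((norm (f x))\<^sup>2 + (norm (g x))\<^sup>2)"
  proof (intro AE_I2)
    fix x
    have "norm (cinner (f x) (g x)) \<le> norm (f x) * norm (g x)" by (rule cinner_cauchy_schwarz)
    also have "\<dots> \<le> (norm (f x))\<^sup>2 + (norm (g x))\<^sup>2" by (rule prod_le_sq_sum) auto
    finally show "norm (cinner (f x) (g x)) \<le> norm ((norm (f x))\<^sup>2 + (norm (g x))\<^sup>2)" by simp
  qed
qed

lemma L2_inner_diff_right:
  assumes "f \<in> L2 X" "g1 \<in> L2 X" "g2 \<in> L2 X"
  shows "L2_inner X f (\<lambda>x. g1 x - g2 x) = L2_inner X f g1 - L2_inner X f g2"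
  unfolding L2_inner_def cinner_diff_right
  by (rule Bochner_Integration.integral_diff) (use cinner_int assms in auto)

lemma L2_inner_diff_left:
  assumes "f \<in> L2 X" "g1 \<in> L2 X" "g2 \<in> L2 X"
  shows "L2_inner X (\<lambda>x. g1 x - g2 x) f = L2_inner X g1 f - L2_inner X g2 f"
  unfolding L2_inner_def cinner_diff_left
  by (rule Bochner_Integration.integral_diff) (use cinner_int assms in auto)

lemma L2_inner_sum_right:
  assumes "\<And>k. k \<in> I \<Longrightarrow> g k \<in> L2 X" "f \<in> L2 X"
  shows "L2_inner X f (\<lambda>x. \<Sum>k\<in>I. scaleC (c k) (g k x)) = (\<Sum>k\<in>I. c k * L2_inner X f (g k))"
  unfolding L2_inner_def cinner_sum_right cinner_scaleC_right
  by (subst Bochner_Integration.integral_sum) (auto intro!: cinner_int assms)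

lemma L2_inner_sum_left:
  assumes "\<And>k. k \<in> I \<Longrightarrow> g k \<in> L2 X" "f \<in> L2 X"
  shows "L2_inner X (\<lambda>x. \<Sum>k\<in>I. scaleC (c k) (g k x)) f = (\<Sum>k\<in>I. cnj (c k) * L2_inner X (g k) f)"
  unfolding L2_inner_def cinner_sum_left cinner_scaleC_left
  by (subst Bochner_Integration.integral_sum) (auto intro!: cinner_int assms)

lemma L2_inner_bound_right:
  assumes X: "compact X" and f: "f \<in> L2 X" and g: "g1 \<in> L2 X" "g2 \<in> L2 X"
    and close: "\<And>x. x \<in> X \<Longrightarrow> norm (g1 x - g2 x) \<le> \<eta>"
  shows "cmod (L2_inner X f g1 - L2_inner X f g2) \<le> \<eta> * (\<integral>x. norm (f x) \<partial>lebesgue_on X)"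
proof -
  have i: "integrable (lebesgue_on X) (\<lambda>x. cinner (f x) (g1 x - g2 x))"
    unfolding cinner_diff_right using cinner_int[OF f g(1)] cinner_int[OF f g(2)] by auto
  have "L2_inner X f g1 - L2_inner X f g2 = (\<integral>x. cinner (f x) (g1 x - g2 x) \<partial>lebesgue_on X)"
    unfolding L2_inner_def cinner_diff_right
    by (rule Bochner_Integration.integral_diff[symmetric]) (use cinner_int f g in auto)
  also have "cmod \<dots> \<le> (\<integral>x. norm (cinner (f x) (g1 x - g2 x)) \<partial>lebesgue_on X)"
    by (rule integral_norm_bound)
  also have "\<dots> \<le> (\<integral>x. \<eta> * norm (f x) \<partial>lebesgue_on X)"
  proof (rule Bochner_Integration.integral_mono)
    show "integrable (lebesgue_on X) (\<lambda>x. norm (cinner (f x) (g1 x - g2 x)))"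
      using i by auto
    show "integrable (lebesgue_on X) (\<lambda>x. \<eta> * norm (f x))"
      using L2_norm_int[OF X f] by auto
    fix x assume "x \<in> space (lebesgue_on X)"
    then have x: "x \<in> X" by simp
    have "norm (cinner (f x) (g1 x - g2 x)) \<le> norm (f x) * norm (g1 x - g2 x)"
      by (rule cinner_cauchy_schwarz)
    also have "\<dots> \<le> norm (f x) * \<eta>" by (intro mult_left_mono close x) auto
    finally show "norm (cinner (f x) (g1 x - g2 x)) \<le> \<eta> * norm (f x)" by (simp add: mult.commute)
  qed
  also have "\<dots> = \<eta> * (\<integral>x. norm (f x) \<partial>lebesgue_on X)" by simp
  finally show ?thesis .
qed

lemma L2_inner_cnj: "L2_inner X g f = cnj (L2_inner X f g)"
proof -
  have "\<And>x. cinner (g x) (f x) = cnj (cinner (f x) (g x))" by (rule cinner_commute)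
  then show ?thesis unfolding L2_inner_def Bochner_Integration.integral_cnj[symmetric] by simp
qed

lemma L2_inner_bound_left:
  assumes X: "compact X" and f: "f \<in> L2 X" and g: "g1 \<in> L2 X" "g2 \<in> L2 X"
    and close: "\<And>x. x \<in> X \<Longrightarrow> norm (g1 x - g2 x) \<le> \<eta>"
  shows "cmod (L2_inner X g1 f - L2_inner X g2 f) \<le> \<eta> * (\<integral>x. norm (f x) \<partial>lebesgue_on X)"
proof -
  have "L2_inner X g1 f = cnj (L2_inner X f g1)" "L2_inner X g2 f = cnj (L2_inner X f g2)"
    by (rule L2_inner_cnj)+
  then have "cmod (L2_inner X g1 f - L2_inner X g2 f) = cmod (L2_inner X f g1 - L2_inner X f g2)"
    by (metis complex_cnj_diff complex_mod_cnj)
  then show ?thesis using L2_inner_bound_right[OF assms] by simp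
qed

lemma AE_zero_cont:
  fixes u :: "'a::euclidean_space \<Rightarrow> 'b::{real_normed_vector,second_countable_topology}"
  assumes X: "compact X"
    and supp: "\<And>U. open U \<Longrightarrow> U \<inter> X \<noteq> {} \<Longrightarrow> emeasure lebesgue (U \<inter> X) > 0"
    and u: "continuous_on X u" and ae: "AE x in lebesgue_on X. u x = 0"
  shows "\<forall>x\<in>X. u x = 0"
proof (rule ccontr)
  assume "\<not> (\<forall>x\<in>X. u x = 0)"
  then obtain x0 where x0: "x0 \<in> X" "u x0 \<noteq> 0" by blast
  have "openin (top_of_set X) (X \<inter> u -` (- {0}))"
    by (rule continuous_openin_preimage_gen[OF u]) auto
  then obtain U where U: "open U" "X \<inter> u -` (- {0}) = X \<inter> U"
    unfolding openin_open by blast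
  have ne: "U \<inter> X \<noteq> {}" using U x0 by auto
  have sU: "X \<inter> U \<in> sets lebesgue"
    using U(1) compact_sets_lebesgue[OF X] by (simp add: borel_open sets.Int)
  have N: "{x \<in> space (lebesgue_on X). \<not> u x = 0} = X \<inter> U"
    using U(2) by auto
  have "X \<inter> U \<in> sets (lebesgue_on X)"
    using sU by (simp add: sets_restrict_space_iff compact_sets_lebesgue[OF X])
  then have "emeasure (lebesgue_on X) (X \<inter> U) = 0"
    using ae AE_iff_measurable[OF _ N] by blast
  moreover have "emeasure (lebesgue_on X) (X \<inter> U) = emeasure lebesgue (X \<inter> U)"
    by (rule emeasure_restrict_space) (auto simp: compact_sets_lebesgue[OF X])
  ultimately show False using supp[OF U(1) ne] by (simp add: Int_commute)
qed

section \<open>The kernel setting\<close>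

lemma uc_gen:
  fixes G :: "'a::euclidean_space \<times> 'a \<Rightarrow> 'b::{banach,second_countable_topology}"
    and s :: "'a \<Rightarrow> real"
  assumes X: "compact X" and G: "continuous_on (X \<times> X) G"
    and s: "s \<in> borel_measurable (lebesgue_on X)" "\<And>y. y \<in> X \<Longrightarrow> \<bar>s y\<bar> \<le> S"
  shows "continuous_on X (\<lambda>x. \<integral>y. s y *\<^sub>R G (x, y) \<partial>lebesgue_on X)"
proof -
  have XX: "compact (X \<times> X)" by (rule compact_Times[OF X X])
  have uc: "uniformly_continuous_on (X \<times> X) G" by (rule compact_uniformly_continuous[OF G XX])
  have Gx: "continuous_on X (\<lambda>y. G (x, y))" if "x \<in> X" for x
    by (rule continuous_on_compose2[OF G]) (auto intro!: continuous_intros simp: that)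
  obtain GB where GB: "\<And>p. p \<in> X \<times> X \<Longrightarrow> norm (G p) \<le> GB"
    using cont_bnd[OF XX G] by blast
  have S0: "S \<ge> 0" if "X \<noteq> {}" using s(2) that by (meson abs_ge_zero all_not_in_conv order_trans)
  have int: "integrable (lebesgue_on X) (\<lambda>y. s y *\<^sub>R G (x, y))" if "x \<in> X" for x
  proof (rule int_bnd[OF X, where B="S * GB"])
    show "(\<lambda>y. s y *\<^sub>R G (x, y)) \<in> borel_measurable (lebesgue_on X)"
      using s(1) cont_meas[OF X Gx[OF that]] by measurable
    fix y assume y: "y \<in> X"
    have "norm (s y *\<^sub>R G (x, y)) = \<bar>s y\<bar> * norm (G (x, y))" by simp
    also have "\<dots> \<le> S * GB"
      by (intro mult_mono s(2) y GB) (use that y S0 in auto)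
    finally show "norm (s y *\<^sub>R G (x, y)) \<le> S * GB" .
  qed
  define mu where "mu = measure (lebesgue_on X) X"
  have mu0: "mu \<ge> 0" by (simp add: mu_def)
  show ?thesis
    unfolding continuous_on_iff
  proof (intro ballI allI impI)
    fix x e assume x: "x \<in> X" and e: "(e::real) > 0"
    define e' where "e' = e / ((S + 1) * (mu + 1))"
    have S0': "S \<ge> 0" using S0 x by blast
    have e': "e' > 0" unfolding e'_def using e S0' mu0 by simp
    obtain d where d: "d > 0" "\<And>p p'. p \<in> X \<times> X \<Longrightarrow> p' \<in> X \<times> X \<Longrightarrow> dist p' p < d \<Longrightarrow> dist (G p') (G p) < e'"
      using uc e' unfolding uniformly_continuous_on_def by metis
    have "dist (\<integral>y. s y *\<^sub>R G (x', y) \<partial>lebesgue_on X) (\<integral>y. s y *\<^sub>R G (x, y) \<partial>lebesgue_on X) < e"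
      if x': "x' \<in> X" "dist x' x < d" for x'
    proof -
      have cl: "norm (G (x', y) - G (x, y)) \<le> e'" if y: "y \<in> X" for y
      proof -
        have "dist (x', y) (x, y) = dist x' x" by (simp add: dist_Pair_Pair)
        then show ?thesis using d(2)[of "(x, y)" "(x', y)"] x x' y by (simp add: dist_norm)
      qed
      have "dist (\<integral>y. s y *\<^sub>R G (x', y) \<partial>lebesgue_on X) (\<integral>y. s y *\<^sub>R G (x, y) \<partial>lebesgue_on X)
          = norm (\<integral>y. s y *\<^sub>R (G (x', y) - G (x, y)) \<partial>lebesgue_on X)"
        unfolding dist_norm scaleR_diff_right
        by (subst Bochner_Integration.integral_diff) (auto intro!: int x x')
      also have "\<dots> \<le> (\<integral>y. norm (s y *\<^sub>R (G (x', y) - G (x, y))) \<partial>lebesgue_on X)"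
        by (rule integral_norm_bound)
      also have "\<dots> \<le> (\<integral>y. S * e' \<partial>lebesgue_on X)"
      proof (rule Bochner_Integration.integral_mono)
        show "integrable (lebesgue_on X) (\<lambda>y. norm (s y *\<^sub>R (G (x', y) - G (x, y))))"
          unfolding scaleR_diff_right using int[OF x] int[OF x'(1)] by auto
        show "integrable (lebesgue_on X) (\<lambda>y. S * e')"
          using fm_on[OF X] by (simp add: finite_measure.integrable_const)
        fix y assume "y \<in> space (lebesgue_on X)"
        then have y: "y \<in> X" by simp
        show "norm (s y *\<^sub>R (G (x', y) - G (x, y))) \<le> S * e'"
          using mult_mono[OF s(2)[OF y] cl[OF y]] S0' e' by simp
      qed
      also have "\<dots> = S * e' * mu" by (simp add: mu_def)
      also have "\<dots> < e"
      proof -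
        have "S * e' * mu = e * (S / (S + 1)) * (mu / (mu + 1))"
          unfolding e'_def using S0' mu0 by (simp add: field_simps)
        also have "\<dots> < e * 1 * 1"
        proof -
          have "S / (S + 1) < 1" "mu / (mu + 1) < 1" using S0' mu0 by auto
          moreover have "S / (S + 1) \<ge> 0" "mu / (mu + 1) \<ge> 0" using S0' mu0 by auto
          ultimately show ?thesis using e
            by (metis mult_le_less_imp_less mult_strict_left_mono order_le_less mult_less_cancel_left_pos
                mult_nonneg_nonneg less_eq_real_def mult.assoc mult_strict_mono zero_less_one)
        qed
        finally show ?thesis by simp
      qed
      finally show ?thesis .
    qed
    then show "\<exists>d>0. \<forall>x'\<in>X. dist x' x < d \<longrightarrow>
        dist (\<integral>y. s y *\<^sub>R G (x', y) \<partial>lebesgue_on X) (\<integral>y. s y *\<^sub>R G (x, y) \<partial>lebesgue_on X) < e"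
      using d(1) by blast
  qed
qed

definition dm :: "'a::euclidean_space set \<Rightarrow> 'a \<Rightarrow> real \<Rightarrow> real" where
  "dm X z \<epsilon> = measure lebesgue (ball z \<epsilon> \<inter> X)"

definition df :: "'a::euclidean_space set \<Rightarrow> 'a \<Rightarrow> real \<Rightarrow> 'b::real_normed_vector \<Rightarrow> 'a \<Rightarrow> 'b" where
  "df X z \<epsilon> h = (\<lambda>y. (indicator (ball z \<epsilon>) y / dm X z \<epsilon>) *\<^sub>R h)"

lemma ind_meas: "indicator (ball z \<epsilon>) \<in> borel_measurable (lebesgue_on X)"
  by (rule meas_borel, rule borel_measurable_indicator) (simp add: borel_open)

lemma dm_pos:
  assumes X: "compact X"
    and supp: "\<And>U. open U \<Longrightarrow> U \<inter> X \<noteq> {} \<Longrightarrow> emeasure lebesgue (U \<inter> X) > 0"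
    and z: "z \<in> X" and e: "\<epsilon> > 0"
  shows "dm X z \<epsilon> > 0"
proof -
  have pos: "emeasure lebesgue (ball z \<epsilon> \<inter> X) > 0"
    using supp[of "ball z \<epsilon>"] z e by (metis IntI centre_in_ball empty_iff open_ball)
  have "X \<inter> ball z \<epsilon> \<in> fmeasurable lebesgue"
    by (rule fmeasurable_Int_fmeasurable) (auto simp: lmeasurable_compact X borel_open)
  then have "emeasure lebesgue (X \<inter> ball z \<epsilon>) < top"
    by (meson fmeasurableD2 less_top)
  then have "emeasure lebesgue (ball z \<epsilon> \<inter> X) < top"
    by (simp only: Int_commute)
  then show ?thesis using pos unfolding dm_def measure_def by (simp add: enn2real_positive_iff)
qed

lemma int_ind:
  assumes X: "compact X"
  shows "(\<integral>y. indicator (ball z \<epsilon>) y \<partial>lebesgue_on X) = dm X z \<epsilon>"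
proof -
  have "(\<integral>y. indicator (ball z \<epsilon>) y \<partial>lebesgue_on X) = measure (lebesgue_on X) (ball z \<epsilon> \<inter> X)"
    by simp
  also have "\<dots> = measure lebesgue (ball z \<epsilon> \<inter> X)"
    by (rule measure_restrict_space) (auto simp: compact_sets_lebesgue[OF X])
  finally show ?thesis by (simp add: dm_def)
qed

lemma ind_int:
  assumes X: "compact X"
  shows "integrable (lebesgue_on X) (indicator (ball z \<epsilon>) :: _ \<Rightarrow> real)"
  by (rule int_bnd[OF X ind_meas, where B=1]) (simp add: indicator_def)

lemma df_L2:
  fixes h :: "'h::{complex_inner,banach,second_countable_topology}"
  assumes X: "compact X"
  shows "df X z \<epsilon> h \<in> L2 X"
proof -
  have m: "df X z \<epsilon> h \<in> borel_measurable (lebesgue_on X)"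
    unfolding df_def using ind_meas by measurable
  have "integrable (lebesgue_on X) (\<lambda>x. (norm (df X z \<epsilon> h x))\<^sup>2)"
  proof (rule int_bnd[OF X, where B="(norm h / \<bar>dm X z \<epsilon>\<bar>)\<^sup>2"])
    show "(\<lambda>x. (norm (df X z \<epsilon> h x))\<^sup>2) \<in> borel_measurable (lebesgue_on X)"
      using m by measurable
    fix x
    show "norm ((norm (df X z \<epsilon> h x))\<^sup>2) \<le> (norm h / \<bar>dm X z \<epsilon>\<bar>)\<^sup>2"
      by (auto simp: df_def indicator_def power_divide)
  qed
  then show ?thesis using m by (simp add: L2_def)
qed

lemma avg:
  fixes g :: "'a::euclidean_space \<Rightarrow> 'b::{banach,second_countable_topology}"
  assumes X: "compact X" and m: "dm X z \<epsilon> > 0" and z: "z \<in> X" "\<epsilon> > 0"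
    and g: "integrable (lebesgue_on X) g"
    and close: "\<And>y. y \<in> X \<Longrightarrow> y \<in> ball z \<epsilon> \<Longrightarrow> norm (g y - v) \<le> \<delta>"
  shows "norm ((1 / dm X z \<epsilon>) *\<^sub>R (\<integral>y. indicator (ball z \<epsilon>) y *\<^sub>R g y \<partial>lebesgue_on X) - v) \<le> \<delta>"
proof -
  let ?m = "dm X z \<epsilon>"
  have d0: "\<delta> \<ge> 0" using close[of z] z by (meson centre_in_ball norm_ge_zero order_trans)
  have ig: "integrable (lebesgue_on X) (\<lambda>y. indicator (ball z \<epsilon>) y *\<^sub>R g y)"
  proof (rule Bochner_Integration.integrable_bound[OF g])
    show "(\<lambda>y. indicator (ball z \<epsilon>) y *\<^sub>R g y) \<in> borel_measurable (lebesgue_on X)"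
      using ind_meas borel_measurable_integrable[OF g] by measurable
    show "AE x in lebesgue_on X. norm (indicator (ball z \<epsilon>) x *\<^sub>R g x) \<le> norm (g x)"
      by (auto simp: indicator_def)
  qed
  have iv: "integrable (lebesgue_on X) (\<lambda>y. indicator (ball z \<epsilon>) y *\<^sub>R v)"
    using ind_int[OF X] by auto
  have "(\<integral>y. indicator (ball z \<epsilon>) y *\<^sub>R v \<partial>lebesgue_on X) = ?m *\<^sub>R v"
    by (subst integral_scaleR_left) (use ind_int[OF X] int_ind[OF X] in auto)
  then have eq: "(\<integral>y. indicator (ball z \<epsilon>) y *\<^sub>R g y \<partial>lebesgue_on X) - ?m *\<^sub>R v
      = (\<integral>y. indicator (ball z \<epsilon>) y *\<^sub>R (g y - v) \<partial>lebesgue_on X)"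
    unfolding scaleR_diff_right
    by (subst Bochner_Integration.integral_diff[OF ig iv]) simp
  have "norm (\<integral>y. indicator (ball z \<epsilon>) y *\<^sub>R (g y - v) \<partial>lebesgue_on X)
      \<le> (\<integral>y. norm (indicator (ball z \<epsilon>) y *\<^sub>R (g y - v)) \<partial>lebesgue_on X)"
    by (rule integral_norm_bound)
  also have "\<dots> \<le> (\<integral>y. indicator (ball z \<epsilon>) y * \<delta> \<partial>lebesgue_on X)"
  proof (rule Bochner_Integration.integral_mono)
    show "integrable (lebesgue_on X) (\<lambda>y. norm (indicator (ball z \<epsilon>) y *\<^sub>R (g y - v)))"
      using ig iv unfolding scaleR_diff_right by auto
    show "integrable (lebesgue_on X) (\<lambda>y. indicator (ball z \<epsilon>) y * \<delta>)"
      using ind_int[OF X] by auto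
    fix y assume "y \<in> space (lebesgue_on X)"
    then have y: "y \<in> X" by simp
    show "norm (indicator (ball z \<epsilon>) y *\<^sub>R (g y - v)) \<le> indicator (ball z \<epsilon>) y * \<delta>"
      using close[OF y] by (auto simp: indicator_def)
  qed
  also have "\<dots> = ?m * \<delta>" using int_ind[OF X] by simp
  finally have bnd: "norm ((\<integral>y. indicator (ball z \<epsilon>) y *\<^sub>R g y \<partial>lebesgue_on X) - ?m *\<^sub>R v) \<le> ?m * \<delta>"
    using eq by simp
  have "(1 / ?m) *\<^sub>R (\<integral>y. indicator (ball z \<epsilon>) y *\<^sub>R g y \<partial>lebesgue_on X) - v
      = (1 / ?m) *\<^sub>R ((\<integral>y. indicator (ball z \<epsilon>) y *\<^sub>R g y \<partial>lebesgue_on X) - ?m *\<^sub>R v)"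
    using m by (simp add: scaleR_diff_right)
  also have "norm \<dots> = (1 / ?m) * norm ((\<integral>y. indicator (ball z \<epsilon>) y *\<^sub>R g y \<partial>lebesgue_on X) - ?m *\<^sub>R v)"
    using m by simp
  also have "\<dots> \<le> (1 / ?m) * (?m * \<delta>)"
    using bnd m by (intro mult_left_mono) auto
  also have "\<dots> = \<delta>" using m by simp
  finally show ?thesis .
qed

lemma ev_small: "d > 0 \<Longrightarrow> eventually (\<lambda>k. 1 / real (Suc k) < d) sequentially"
proof -
  assume "d > 0"
  then obtain n where n: "inverse (real (Suc n)) < d" using reals_Archimedean by blast
  show ?thesis
  proof (rule eventually_sequentiallyI[of n])
    fix k assume "n \<le> k"
    then have "1 / real (Suc k) \<le> 1 / real (Suc n)" by (simp add: frac_le)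
    then show "1 / real (Suc k) < d" using n by (simp add: inverse_eq_divide)
  qed
qed

locale kern =
  fixes X :: "'a::euclidean_space set"
    and P :: "'a \<Rightarrow> 'a \<Rightarrow> 'h::{complex_inner,banach,second_countable_topology} \<Rightarrow> 'h"
    and lam :: "nat \<Rightarrow> real"
    and \<phi> :: "nat \<Rightarrow> 'a \<Rightarrow> 'h"
  assumes X_compact: "compact X"
    and X_support: "\<And>U. open U \<Longrightarrow> U \<inter> X \<noteq> {} \<Longrightarrow> emeasure lebesgue (U \<inter> X) > 0"
    and P_hs: "\<And>x y. x \<in> X \<Longrightarrow> y \<in> X \<Longrightarrow> hilbert_schmidt (P x y)"
    and P_cont: "\<And>x y e. x \<in> X \<Longrightarrow> y \<in> X \<Longrightarrow> e > 0 \<Longrightarrow>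
        \<exists>d>0. \<forall>x'\<in>X. \<forall>y'\<in>X. dist (x', y') (x, y) < d \<longrightarrow>
                 hs_norm (\<lambda>h. P x' y' h - P x y h) < e"
    and P_herm: "\<And>f g. f \<in> L2 X \<Longrightarrow> g \<in> L2 X \<Longrightarrow>
        L2_inner X f (kernel_op X P g) = L2_inner X (kernel_op X P f) g"
    and phi_cont: "\<And>l. continuous_on X (\<phi> l)"
    and phi_L2: "\<And>l. \<phi> l \<in> L2 X"
    and phi_orthonormal: "\<And>k l. L2_inner X (\<phi> k) (\<phi> l) = (if k = l then 1 else 0)"
    and eigen: "\<And>l. AE x in lebesgue_on X. kernel_op X P (\<phi> l) x = scaleC (complex_of_real (lam l)) (\<phi> l x)"
    and eigen_complete: "\<And>f. f \<in> L2 X \<Longrightarrow> (\<forall>l. L2_inner X (\<phi> l) f = 0) \<Longrightarrow>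
        AE x in lebesgue_on X. kernel_op X P f x = 0"
    and X_ne: "X \<noteq> {}"
begin

lemma ex_onb: "\<exists>B::'h set. is_onb B"
  using X_ne P_hs hs_imp_ex_onb by blast

lemma P_hsB: "x \<in> X \<Longrightarrow> y \<in> X \<Longrightarrow> hsB (P x y)"
  using P_hs hs_imp_hsB by blast

lemma P_bl: "x \<in> X \<Longrightarrow> y \<in> X \<Longrightarrow> bounded_linear (P x y)"
  using P_hs unfolding hilbert_schmidt_def bounded_clinear_def by blast

lemma P_scaleR: "x \<in> X \<Longrightarrow> y \<in> X \<Longrightarrow> P x y (r *\<^sub>R v) = r *\<^sub>R P x y v"
  using P_bl bounded_linear.linear linear_scale by metis

lemma P_diff: "x \<in> X \<Longrightarrow> y \<in> X \<Longrightarrow> P x y (a - b) = P x y a - P x y b"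
  using P_bl bounded_linear.linear linear_diff by metis

lemma P_op: "x \<in> X \<Longrightarrow> y \<in> X \<Longrightarrow> norm (P x y v) \<le> hs_norm (P x y) * norm v"
  using hsB_op[OF P_hsB ex_onb] by blast

lemma P_diff_small:
  assumes "x \<in> X" "y \<in> X" "x' \<in> X" "y' \<in> X" "hs_norm (\<lambda>h. P x' y' h - P x y h) \<le> e"
  shows "norm (P x' y' v - P x y v) \<le> e * norm v"
  using hsB_op_small[OF hsB_diff[OF P_hsB P_hsB] ex_onb, of x' y' x y e v] assms by simp

lemma P_cont_vec:
  assumes w: "continuous_on X w"
  shows "continuous_on (X \<times> X) (\<lambda>p. P (fst p) (snd p) (w (snd p)))"
  unfolding continuous_on_iff
proof (intro ballI allI impI)
  fix p e assume p: "p \<in> X \<times> X" and e: "(e::real) > 0"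
  obtain x y where xy: "p = (x, y)" "x \<in> X" "y \<in> X" using p by auto
  obtain W where W: "\<And>y. y \<in> X \<Longrightarrow> norm (w y) \<le> W" using cont_bnd[OF X_compact w] by blast
  have W0: "W \<ge> 0" using W[OF xy(3)] norm_ge_zero order_trans by blast
  define M where "M = hs_norm (P x y)"
  have M0: "M \<ge> 0" unfolding M_def hs_norm_def by (auto intro!: infsum_nonneg)
  have e1: "e / (2 * (M + 1)) > 0" using e M0 by simp
  obtain d1 where d1: "d1 > 0" "\<And>y'. y' \<in> X \<Longrightarrow> dist y' y < d1 \<Longrightarrow> dist (w y') (w y) < e / (2 * (M + 1))"
    using w xy(3) e1 unfolding continuous_on_iff by metis
  have e2: "e / (2 * (W + 1)) > 0" using e W0 by simp
  obtain d2 where d2: "d2 > 0" "\<And>x' y'. x' \<in> X \<Longrightarrow> y' \<in> X \<Longrightarrow> dist (x', y') (x, y) < d2 \<Longrightarrow>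
      hs_norm (\<lambda>h. P x' y' h - P x y h) < e / (2 * (W + 1))"
    using P_cont[OF xy(2,3) e2] by blast
  have "dist (P (fst p') (snd p') (w (snd p'))) (P (fst p) (snd p) (w (snd p))) < e"
    if p': "p' \<in> X \<times> X" "dist p' p < min d1 d2" for p'
  proof -
    obtain x' y' where xy': "p' = (x', y')" "x' \<in> X" "y' \<in> X" using p' by auto
    have dy: "dist y' y < d1"
      using p' xy xy' dist_snd_le[of p' p] by auto
    have "hs_norm (\<lambda>h. P x' y' h - P x y h) < e / (2 * (W + 1))"
      using d2(2)[OF xy'(2,3)] p' xy xy' by simp
    then have "norm (P x' y' (w y') - P x y (w y')) \<le> e / (2 * (W + 1)) * norm (w y')"
      by (intro P_diff_small[OF xy(2,3) xy'(2,3)]) (rule less_imp_le)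
    also have "\<dots> \<le> e / (2 * (W + 1)) * W"
      using W[OF xy'(3)] e2 by (intro mult_left_mono) auto
    also have "\<dots> < e / 2"
      using e W0 by (simp add: field_simps)
    finally have a: "norm (P x' y' (w y') - P x y (w y')) < e / 2" .
    have "norm (P x y (w y') - P x y (w y)) = norm (P x y (w y' - w y))"
      using P_diff[OF xy(2,3)] by simp
    also have "\<dots> \<le> M * norm (w y' - w y)" unfolding M_def by (rule P_op[OF xy(2,3)])
    also have "\<dots> \<le> M * (e / (2 * (M + 1)))"
      using d1(2)[OF xy'(3) dy] M0 by (intro mult_left_mono) (auto simp: dist_norm)
    also have "\<dots> < e / 2"
      using e M0 by (simp add: field_simps)
    finally have b: "norm (P x y (w y') - P x y (w y)) < e / 2" .
    have "dist (P x' y' (w y')) (P x y (w y)) \<le> norm (P x' y' (w y') - P x y (w y')) + norm (P x y (w y') - P x y (w y))"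
      unfolding dist_norm by (rule order_trans[OF _ norm_triangle_ineq]) simp
    then show ?thesis using a b xy xy' by simp
  qed
  then show "\<exists>d>0. \<forall>p'\<in>X \<times> X. dist p' p < d \<longrightarrow>
      dist (P (fst p') (snd p') (w (snd p'))) (P (fst p) (snd p) (w (snd p))) < e"
    using d1(1) d2(1) by (metis min_less_iff_conj)
qed

lemma P_cont_const: "continuous_on (X \<times> X) (\<lambda>p. P (fst p) (snd p) h)"
  using P_cont_vec[of "\<lambda>_. h"] by simp

lemma P_cont_x:
  assumes "z \<in> X" shows "continuous_on X (\<lambda>x. P x z h)"
proof -
  have "continuous_on X ((\<lambda>p. P (fst p) (snd p) h) \<circ> (\<lambda>x. (x, z)))"
    by (rule continuous_on_compose, intro continuous_intros, rule continuous_on_subset[OF P_cont_const])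
       (use assms in auto)
  then show ?thesis by (simp add: o_def)
qed

lemma P_cont_y:
  assumes "x \<in> X" shows "continuous_on X (\<lambda>y. P x y h)"
proof -
  have "continuous_on X ((\<lambda>p. P (fst p) (snd p) h) \<circ> (\<lambda>y. (x, y)))"
    by (rule continuous_on_compose, intro continuous_intros, rule continuous_on_subset[OF P_cont_const])
       (use assms in auto)
  then show ?thesis by (simp add: o_def)
qed

lemma K_cont:
  assumes w: "continuous_on X w"
  shows "continuous_on X (kernel_op X P w)"
proof -
  have "continuous_on X (\<lambda>x. \<integral>y. (1::real) *\<^sub>R (\<lambda>p. P (fst p) (snd p) (w (snd p))) (x, y) \<partial>lebesgue_on X)"
    by (rule uc_gen[OF X_compact P_cont_vec[OF w], where S=1]) auto
  then show ?thesis unfolding kernel_op_def by simp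
qed

lemma Kdf_eq:
  assumes x: "x \<in> X"
  shows "kernel_op X P (df X z \<epsilon> h) x = (1 / dm X z \<epsilon>) *\<^sub>R (\<integral>y. indicator (ball z \<epsilon>) y *\<^sub>R P x y h \<partial>lebesgue_on X)"
proof -
  have "kernel_op X P (df X z \<epsilon> h) x = (\<integral>y. (indicator (ball z \<epsilon>) y / dm X z \<epsilon>) *\<^sub>R P x y h \<partial>lebesgue_on X)"
    unfolding kernel_op_def df_def
    by (rule Bochner_Integration.integral_cong) (auto simp: P_scaleR x)
  also have "\<dots> = (\<integral>y. (1 / dm X z \<epsilon>) *\<^sub>R (indicator (ball z \<epsilon>) y *\<^sub>R P x y h) \<partial>lebesgue_on X)"
    by (rule Bochner_Integration.integral_cong) auto
  also have "\<dots> = (1 / dm X z \<epsilon>) *\<^sub>R (\<integral>y. indicator (ball z \<epsilon>) y *\<^sub>R P x y h \<partial>lebesgue_on X)"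
    by (rule integral_scaleR_right)
  finally show ?thesis .
qed

lemma Kdf_cont: "continuous_on X (kernel_op X P (df X z \<epsilon> h))"
proof -
  have "continuous_on X (\<lambda>x. \<integral>y. indicator (ball z \<epsilon>) y *\<^sub>R (\<lambda>p. P (fst p) (snd p) h) (x, y) \<partial>lebesgue_on X)"
    by (rule uc_gen[OF X_compact P_cont_const ind_meas, where S=1]) (auto simp: indicator_def)
  then have "continuous_on X (\<lambda>x. (1 / dm X z \<epsilon>) *\<^sub>R (\<integral>y. indicator (ball z \<epsilon>) y *\<^sub>R P x y h \<partial>lebesgue_on X))"
    by (auto intro!: continuous_intros)
  then show ?thesis by (rule continuous_on_cong[THEN iffD1, rotated 2]) (auto simp: Kdf_eq)
qed

lemma Kdf_close:
  assumes z: "z \<in> X" and eta: "\<eta> > 0"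
  shows "\<exists>d>0. \<forall>\<epsilon>. 0 < \<epsilon> \<longrightarrow> \<epsilon> < d \<longrightarrow> (\<forall>x\<in>X. norm (kernel_op X P (df X z \<epsilon> h) x - P x z h) \<le> \<eta>)"
proof -
  have uc: "uniformly_continuous_on (X \<times> X) (\<lambda>p. P (fst p) (snd p) h)"
    by (rule compact_uniformly_continuous[OF P_cont_const compact_Times[OF X_compact X_compact]])
  obtain d where d: "d > 0" "\<And>p p'. p \<in> X \<times> X \<Longrightarrow> p' \<in> X \<times> X \<Longrightarrow> dist p' p < d \<Longrightarrow>
      dist (P (fst p') (snd p') h) (P (fst p) (snd p) h) < \<eta>"
    using uc eta unfolding uniformly_continuous_on_def by metis
  have "norm (kernel_op X P (df X z \<epsilon> h) x - P x z h) \<le> \<eta>" if e: "0 < \<epsilon>" "\<epsilon> < d" and x: "x \<in> X" for \<epsilon> x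
  proof -
    have m: "dm X z \<epsilon> > 0" by (rule dm_pos[OF X_compact X_support z e(1)])
    have "norm ((1 / dm X z \<epsilon>) *\<^sub>R (\<integral>y. indicator (ball z \<epsilon>) y *\<^sub>R P x y h \<partial>lebesgue_on X) - P x z h) \<le> \<eta>"
    proof (rule avg[OF X_compact m z e(1)])
      show "integrable (lebesgue_on X) (\<lambda>y. P x y h)" by (rule cont_int[OF X_compact P_cont_y[OF x]])
      fix y assume y: "y \<in> X" "y \<in> ball z \<epsilon>"
      have "dist (x, y) (x, z) < d" using y e by (simp add: dist_Pair_Pair dist_commute)
      then show "norm (P x y h - P x z h) \<le> \<eta>"
        using d(2)[of "(x, z)" "(x, y)"] x y z by (simp add: dist_norm less_imp_le)
    qed
    then show ?thesis by (simp add: Kdf_eq x)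
  qed
  then show ?thesis using d(1) by blast
qed

lemma eig_pt: "x \<in> X \<Longrightarrow> kernel_op X P (\<phi> l) x = scaleC (complex_of_real (lam l)) (\<phi> l x)"
proof -
  have c: "continuous_on X (\<lambda>x. kernel_op X P (\<phi> l) x - scaleC (complex_of_real (lam l)) (\<phi> l x))"
    by (intro continuous_intros K_cont phi_cont)
  have "AE x in lebesgue_on X. kernel_op X P (\<phi> l) x - scaleC (complex_of_real (lam l)) (\<phi> l x) = 0"
    using eigen[of l] by eventually_elim simp
  then show "x \<in> X \<Longrightarrow> ?thesis" using AE_zero_cont[OF X_compact X_support c] by simp
qed

lemma df_lim:
  assumes g: "continuous_on X g" and z: "z \<in> X"
  shows "(\<lambda>k. L2_inner X g (df X z (1 / real (Suc k)) h)) \<longlonglongrightarrow> cinner (g z) h"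
proof (rule LIMSEQ_I)
  fix r :: real assume r: "r > 0"
  have cq: "continuous_on X (\<lambda>y. cinner (g y) h)" by (intro continuous_intros g)
  obtain d where d: "d > 0" "\<And>y. y \<in> X \<Longrightarrow> dist y z < d \<Longrightarrow> dist (cinner (g y) h) (cinner (g z) h) < r / 2"
    using cq z r unfolding continuous_on_iff by (metis half_gt_zero)
  obtain N where N: "\<And>k. k \<ge> N \<Longrightarrow> 1 / real (Suc k) < d"
    using ev_small[OF d(1)] unfolding eventually_sequentially by blast
  have "norm (L2_inner X g (df X z (1 / real (Suc k)) h) - cinner (g z) h) < r" if k: "k \<ge> N" for k
  proof -
    define \<epsilon> where "\<epsilon> = 1 / real (Suc k)"
    have e: "\<epsilon> > 0" "\<epsilon> < d" using N[OF k] by (auto simp: \<epsilon>_def)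
    have m: "dm X z \<epsilon> > 0" by (rule dm_pos[OF X_compact X_support z e(1)])
    have "L2_inner X g (df X z \<epsilon> h) = (\<integral>y. (1 / dm X z \<epsilon>) *\<^sub>R (indicator (ball z \<epsilon>) y *\<^sub>R cinner (g y) h) \<partial>lebesgue_on X)"
      unfolding L2_inner_def df_def cinner_scaleR_right
      by (rule Bochner_Integration.integral_cong) auto
    also have "\<dots> = (1 / dm X z \<epsilon>) *\<^sub>R (\<integral>y. indicator (ball z \<epsilon>) y *\<^sub>R cinner (g y) h \<partial>lebesgue_on X)"
      by (rule integral_scaleR_right)
    finally have eq: "L2_inner X g (df X z \<epsilon> h) = \<dots>" .
    have "norm ((1 / dm X z \<epsilon>) *\<^sub>R (\<integral>y. indicator (ball z \<epsilon>) y *\<^sub>R cinner (g y) h \<partial>lebesgue_on X) - cinner (g z) h) \<le> r / 2"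
    proof (rule avg[OF X_compact m z e(1)])
      show "integrable (lebesgue_on X) (\<lambda>y. cinner (g y) h)" by (rule cont_int[OF X_compact cq])
      fix y assume y: "y \<in> X" "y \<in> ball z \<epsilon>"
      then have "dist y z < d" using e by (simp add: dist_commute)
      then show "norm (cinner (g y) h - cinner (g z) h) \<le> r / 2"
        using d(2)[OF y(1)] by (simp add: dist_norm less_imp_le)
    qed
    then show ?thesis using eq r by (simp add: \<epsilon>_def)
  qed
  then show "\<exists>no. \<forall>n\<ge>no. norm (L2_inner X g (df X z (1 / real (Suc n)) h) - cinner (g z) h) < r"
    by blast
qed

end

lemma L2_unif_right:
  assumes X: "compact X" and g: "g \<in> L2 X" and F: "\<And>n. F n \<in> L2 X" and G: "G \<in> L2 X"
    and unif: "\<And>\<eta>. \<eta> > 0 \<Longrightarrow> eventually (\<lambda>n. \<forall>x\<in>X. norm (F n x - G x) \<le> \<eta>) sequentially"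
  shows "(\<lambda>n. L2_inner X g (F n)) \<longlonglongrightarrow> L2_inner X g G"
proof (rule tendstoI)
  fix r :: real assume r: "r > 0"
  define I where "I = (\<integral>x. norm (g x) \<partial>lebesgue_on X)"
  have I0: "I \<ge> 0" unfolding I_def by simp
  define \<eta> where "\<eta> = r / (I + 1)"
  have eta: "\<eta> > 0" unfolding \<eta>_def using r I0 by simp
  have "\<eta> * I < r" unfolding \<eta>_def using r I0 by (simp add: field_simps)
  show "eventually (\<lambda>n. dist (L2_inner X g (F n)) (L2_inner X g G) < r) sequentially"
    using unif[OF eta]
  proof eventually_elim
    case (elim n)
    have "cmod (L2_inner X g (F n) - L2_inner X g G) \<le> \<eta> * I"
      unfolding I_def by (rule L2_inner_bound_right[OF X g F G]) (use elim in auto)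
    then show ?case using \<open>\<eta> * I < r\<close> by (simp add: dist_norm)
  qed
qed

lemma L2_unif_left:
  assumes X: "compact X" and g: "g \<in> L2 X" and F: "\<And>n. F n \<in> L2 X" and G: "G \<in> L2 X"
    and unif: "\<And>\<eta>. \<eta> > 0 \<Longrightarrow> eventually (\<lambda>n. \<forall>x\<in>X. norm (F n x - G x) \<le> \<eta>) sequentially"
  shows "(\<lambda>n. L2_inner X (F n) g) \<longlonglongrightarrow> L2_inner X G g"
proof -
  have "(\<lambda>n. cnj (L2_inner X g (F n))) \<longlonglongrightarrow> cnj (L2_inner X g G)"
    by (intro tendsto_cnj L2_unif_right[OF assms])
  then show ?thesis by (simp add: L2_inner_cnj[of X "F _"] L2_inner_cnj[of X G])
qed

context kern
begin

lemma AE_zero_X: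
  fixes u :: "'a \<Rightarrow> 'b::{real_normed_vector,second_countable_topology}"
  assumes "continuous_on X u" "AE x in lebesgue_on X. u x = 0"
  shows "\<forall>x\<in>X. u x = 0"
  by (rule AE_zero_cont[OF X_compact _ assms]) (use X_support in blast)

lemma core:
  fixes z :: 'a and h :: 'h and Q :: "'a \<Rightarrow> 'h"
  assumes z: "z \<in> X"
    and Qlim: "uniform_limit X (\<lambda>n y. \<Sum>l<n. scaleC (complex_of_real (lam l) * cinner (\<phi> l z) h) (\<phi> l y)) Q sequentially"
  shows "\<forall>y\<in>X. P y z h = Q y"
proof -
  define c where "c l = complex_of_real (lam l) * cinner (\<phi> l z) h" for l
  define S where "S n y = (\<Sum>l<n. scaleC (c l) (\<phi> l y))" for n y
  have Qlim': "uniform_limit X S Q sequentially" using Qlim unfolding S_def c_def .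
  have S_cont: "continuous_on X (S n)" for n
    unfolding S_def by (intro continuous_on_sum continuous_on_scaleC continuous_on_const phi_cont)
  have Q_cont: "continuous_on X Q"
    by (rule uniform_limit_theorem[OF _ Qlim']) (auto simp: S_cont)
  have S_unif: "eventually (\<lambda>n. \<forall>x\<in>X. norm (S n x - Q x) \<le> \<eta>) sequentially" if "\<eta> > 0" for \<eta>
  proof -
    have "\<forall>\<^sub>F n in sequentially. \<forall>x\<in>X. dist (S n x) (Q x) < \<eta>"
      using Qlim' that unfolding uniform_limit_iff by blast
    then show ?thesis
      by eventually_elim (simp add: dist_norm less_imp_le)
  qed
  define K where "K y = P y z h" for y
  have K_c: "continuous_on X K" unfolding K_def by (rule P_cont_x[OF z])
  define u where "u y = K y - Q y" for y
  have u_eq: "u = (\<lambda>y. K y - Q y)" by (simp add: u_def fun_eq_iff)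
  have u_c: "continuous_on X u" unfolding u_eq by (intro continuous_intros K_c Q_cont)
  have uL2: "u \<in> L2 X" by (rule cont_L2[OF X_compact u_c])
  have KL2: "K \<in> L2 X" by (rule cont_L2[OF X_compact K_c])
  have QL2: "Q \<in> L2 X" by (rule cont_L2[OF X_compact Q_cont])
  have SL2: "S n \<in> L2 X" for n by (rule cont_L2[OF X_compact S_cont])
  define f where "f k = df X z (1 / real (Suc k)) h" for k
  have fL2: "f k \<in> L2 X" for k unfolding f_def by (rule df_L2[OF X_compact])
  define Pf where "Pf k = kernel_op X P (f k)" for k
  have PfL2: "Pf k \<in> L2 X" for k unfolding Pf_def f_def by (rule cont_L2[OF X_compact Kdf_cont])
  have Pf_unif: "eventually (\<lambda>k. \<forall>x\<in>X. norm (Pf k x - K x) \<le> \<eta>) sequentially" if eta: "\<eta> > 0" for \<eta>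
  proof -
    obtain d where d: "d > 0" "\<And>\<epsilon>. 0 < \<epsilon> \<Longrightarrow> \<epsilon> < d \<Longrightarrow> (\<forall>x\<in>X. norm (kernel_op X P (df X z \<epsilon> h) x - P x z h) \<le> \<eta>)"
      using Kdf_close[OF z eta, of h] by blast
    show ?thesis using ev_small[OF d(1)]
      by eventually_elim (use d(2) in \<open>auto simp: Pf_def f_def K_def\<close>)
  qed
  have lim_right: "(\<lambda>k. L2_inner X g (Pf k)) \<longlonglongrightarrow> L2_inner X g K" if "g \<in> L2 X" for g
    by (rule L2_unif_right[OF X_compact that PfL2 KL2 Pf_unif])
  have lim_left: "(\<lambda>k. L2_inner X (Pf k) g) \<longlonglongrightarrow> L2_inner X K g" if "g \<in> L2 X" for g
    by (rule L2_unif_left[OF X_compact that PfL2 KL2 Pf_unif])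
  have cK: "L2_inner X (\<phi> l) K = c l" for l
  proof -
    have eq: "L2_inner X (\<phi> l) (Pf k) = complex_of_real (lam l) * L2_inner X (\<phi> l) (f k)" for k
    proof -
      have "L2_inner X (\<phi> l) (Pf k) = L2_inner X (kernel_op X P (\<phi> l)) (f k)"
        unfolding Pf_def by (rule P_herm[OF phi_L2 fL2])
      also have "\<dots> = L2_inner X (\<lambda>x. scaleC (complex_of_real (lam l)) (\<phi> l x)) (f k)"
        unfolding L2_inner_def by (rule Bochner_Integration.integral_cong) (auto simp: eig_pt)
      also have "\<dots> = complex_of_real (lam l) * L2_inner X (\<phi> l) (f k)"
        unfolding L2_inner_def cinner_scaleC_left by simp
      finally show ?thesis .
    qed
    have "(\<lambda>k. L2_inner X (\<phi> l) (f k)) \<longlonglongrightarrow> cinner (\<phi> l z) h"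
      unfolding f_def by (rule df_lim[OF phi_cont z])
    then have "(\<lambda>k. L2_inner X (\<phi> l) (Pf k)) \<longlonglongrightarrow> c l"
      unfolding eq c_def by (rule tendsto_mult_left)
    moreover have "(\<lambda>k. L2_inner X (\<phi> l) (Pf k)) \<longlonglongrightarrow> L2_inner X (\<phi> l) K"
      by (rule lim_right[OF phi_L2])
    ultimately show ?thesis using LIMSEQ_unique by blast
  qed
  have cQ: "L2_inner X (\<phi> l) Q = c l" for l
  proof -
    have "L2_inner X (\<phi> l) (S n) = (\<Sum>k<n. c k * L2_inner X (\<phi> l) (\<phi> k))" for n
      unfolding S_def by (rule L2_inner_sum_right) (auto intro: phi_L2)
    also have "\<dots> n = (\<Sum>k<n. if k = l then c k else 0)" for n
      by (intro sum.cong) (auto simp: phi_orthonormal)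
    also have "\<dots> n = (if l < n then c l else 0)" for n
      by (simp add: sum.delta')
    finally have eqS: "L2_inner X (\<phi> l) (S n) = (if l < n then c l else 0)" for n .
    have "eventually (\<lambda>n. L2_inner X (\<phi> l) (S n) = c l) sequentially"
      using eventually_gt_at_top[of l] by eventually_elim (simp add: eqS)
    then have "(\<lambda>n. L2_inner X (\<phi> l) (S n)) \<longlonglongrightarrow> c l" by (rule tendsto_eventually)
    moreover have "(\<lambda>n. L2_inner X (\<phi> l) (S n)) \<longlonglongrightarrow> L2_inner X (\<phi> l) Q"
      by (rule L2_unif_right[OF X_compact phi_L2 SL2 QL2 S_unif])
    ultimately show ?thesis using LIMSEQ_unique by blast
  qed
  have cu: "L2_inner X (\<phi> l) u = 0" for l
    unfolding u_eq by (subst L2_inner_diff_right[OF phi_L2 KL2 QL2]) (simp add: cK cQ)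
  have aePu: "AE x in lebesgue_on X. kernel_op X P u x = 0"
    using eigen_complete[OF uL2] cu by blast
  have Pu0: "\<forall>x\<in>X. kernel_op X P u x = 0"
    by (rule AE_zero_X[OF K_cont[OF u_c] aePu])
  have Ku: "L2_inner X K u = 0"
  proof -
    have "L2_inner X (Pf k) u = 0" for k
    proof -
      have "L2_inner X (Pf k) u = L2_inner X (f k) (kernel_op X P u)"
        unfolding Pf_def by (rule P_herm[OF fL2 uL2, symmetric])
      also have "\<dots> = 0"
        unfolding L2_inner_def by (subst Bochner_Integration.integral_cong[where g="\<lambda>_. 0"]) (auto simp: Pu0)
      finally show ?thesis .
    qed
    then have "(\<lambda>k. L2_inner X (Pf k) u) \<longlonglongrightarrow> 0" by simp
    then show ?thesis using lim_left[OF uL2] LIMSEQ_unique by blast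
  qed
  have Qu: "L2_inner X Q u = 0"
  proof -
    have "L2_inner X (S n) u = 0" for n
      unfolding S_def by (subst L2_inner_sum_left) (auto intro: phi_L2 uL2 simp: cu)
    then have "(\<lambda>n. L2_inner X (S n) u) \<longlonglongrightarrow> 0" by simp
    then show ?thesis using L2_unif_left[OF X_compact uL2 SL2 QL2 S_unif] LIMSEQ_unique by blast
  qed
  have "L2_inner X u u = 0"
    using Ku Qu by (subst (1) u_eq) (simp add: L2_inner_diff_left[OF uL2 KL2 QL2])
  moreover have "L2_inner X u u = complex_of_real (\<integral>x. (norm (u x))\<^sup>2 \<partial>lebesgue_on X)"
    unfolding L2_inner_def cinner_self by (rule integral_complex_of_real)
  ultimately have "(\<integral>x. (norm (u x))\<^sup>2 \<partial>lebesgue_on X) = 0" by (simp only: of_real_eq_0_iff)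
  then have "AE x in lebesgue_on X. (norm (u x))\<^sup>2 = 0"
    using integral_nonneg_eq_0_iff_AE[OF L2_sq_int[OF uL2]] by simp
  then have "AE x in lebesgue_on X. u x = 0" by simp
  then have "\<forall>x\<in>X. u x = 0" by (rule AE_zero_X[OF u_c])
  then show ?thesis by (simp add: u_def K_def)
qed

end

context kern
begin

lemma Kdf_unif:
  assumes z: "z \<in> X" and eta: "\<eta> > 0"
  shows "eventually (\<lambda>k. \<forall>x\<in>X. norm (kernel_op X P (df X z (1 / real (Suc k)) h) x - P x z h) \<le> \<eta>) sequentially"
proof -
  obtain d where d: "d > 0" "\<And>\<epsilon>. 0 < \<epsilon> \<Longrightarrow> \<epsilon> < d \<Longrightarrow> (\<forall>x\<in>X. norm (kernel_op X P (df X z \<epsilon> h) x - P x z h) \<le> \<eta>)"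
    using Kdf_close[OF z eta, of h] by blast
  show ?thesis using ev_small[OF d(1)]
    by eventually_elim (use d(2) in auto)
qed

lemma int_norm_df:
  assumes z: "z \<in> X" and e: "\<epsilon> > 0"
  shows "(\<integral>y. norm (df X z \<epsilon> h y) \<partial>lebesgue_on X) = norm h"
proof -
  have m: "dm X z \<epsilon> > 0" by (rule dm_pos[OF X_compact X_support z e])
  have "(\<integral>y. norm (df X z \<epsilon> h y) \<partial>lebesgue_on X) = (\<integral>y. indicator (ball z \<epsilon>) y * (norm h / dm X z \<epsilon>) \<partial>lebesgue_on X)"
    using m by (intro Bochner_Integration.integral_cong) (auto simp: df_def indicator_def)
  also have "\<dots> = (\<integral>y. indicator (ball z \<epsilon>) y \<partial>lebesgue_on X) * (norm h / dm X z \<epsilon>)"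
    by (rule integral_mult_left_zero)
  also have "\<dots> = dm X z \<epsilon> * (norm h / dm X z \<epsilon>)"
    by (simp only: int_ind[OF X_compact])
  also have "\<dots> = norm h" using m by simp
  finally show ?thesis .
qed

lemma df_lim2:
  assumes z: "z \<in> X" and G: "continuous_on X G" and F: "\<And>k. F k \<in> L2 X"
    and unif: "\<And>\<eta>. \<eta> > 0 \<Longrightarrow> eventually (\<lambda>k. \<forall>x\<in>X. norm (F k x - G x) \<le> \<eta>) sequentially"
  shows "(\<lambda>k. L2_inner X (df X z (1 / real (Suc k)) h) (F k)) \<longlonglongrightarrow> cinner h (G z)"
proof -
  define f where "f k = df X z (1 / real (Suc k)) h" for k
  have fL2: "f k \<in> L2 X" for k unfolding f_def by (rule df_L2[OF X_compact])
  have GL2: "G \<in> L2 X" by (rule cont_L2[OF X_compact G])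
  have nf: "(\<integral>y. norm (f k y) \<partial>lebesgue_on X) = norm h" for k
    unfolding f_def by (rule int_norm_df[OF z]) simp
  have d0: "(\<lambda>k. L2_inner X (f k) (F k) - L2_inner X (f k) G) \<longlonglongrightarrow> 0"
  proof (rule tendstoI)
    fix r :: real assume r: "r > 0"
    define \<eta> where "\<eta> = r / (norm h + 1)"
    have eta: "\<eta> > 0" unfolding \<eta>_def using r by (simp add: add_nonneg_pos)
    have "norm h / (norm h + 1) < 1" by (simp add: divide_less_eq add_pos_nonneg) (smt (verit) norm_ge_zero)
    then have "r * (norm h / (norm h + 1)) < r * 1" using r by (rule mult_strict_left_mono)
    then have lt: "\<eta> * norm h < r" unfolding \<eta>_def by simp
    show "eventually (\<lambda>k. dist (L2_inner X (f k) (F k) - L2_inner X (f k) G) 0 < r) sequentially"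
      using unif[OF eta]
    proof eventually_elim
      case (elim k)
      have "cmod (L2_inner X (f k) (F k) - L2_inner X (f k) G) \<le> \<eta> * (\<integral>y. norm (f k y) \<partial>lebesgue_on X)"
        by (rule L2_inner_bound_right[OF X_compact fL2 F GL2]) (use elim in auto)
      then show ?case using lt nf[of k] by simp
    qed
  qed
  have "(\<lambda>k. L2_inner X G (f k)) \<longlonglongrightarrow> cinner (G z) h"
    unfolding f_def by (rule df_lim[OF G z])
  then have "(\<lambda>k. cnj (L2_inner X G (f k))) \<longlonglongrightarrow> cnj (cinner (G z) h)"
    by (rule tendsto_cnj)
  then have l2: "(\<lambda>k. L2_inner X (f k) G) \<longlonglongrightarrow> cinner h (G z)"
    by (simp add: L2_inner_cnj[of X "f _" G] cinner_commute[of h])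
  have "(\<lambda>k. (L2_inner X (f k) (F k) - L2_inner X (f k) G) + L2_inner X (f k) G) \<longlonglongrightarrow> 0 + cinner h (G z)"
    by (rule tendsto_add[OF d0 l2])
  then show ?thesis unfolding f_def by simp
qed

lemma P_herm_pt:
  assumes x: "x \<in> X" and y: "y \<in> X"
  shows "cinner a (P x y b) = cinner (P y x a) b"
proof -
  define f where "f k = df X x (1 / real (Suc k)) a" for k
  define g where "g k = df X y (1 / real (Suc k)) b" for k
  have fL2: "f k \<in> L2 X" for k unfolding f_def by (rule df_L2[OF X_compact])
  have gL2: "g k \<in> L2 X" for k unfolding g_def by (rule df_L2[OF X_compact])
  have PfL2: "kernel_op X P (f k) \<in> L2 X" for k unfolding f_def by (rule cont_L2[OF X_compact Kdf_cont])
  have PgL2: "kernel_op X P (g k) \<in> L2 X" for k unfolding g_def by (rule cont_L2[OF X_compact Kdf_cont])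
  have l1: "(\<lambda>k. L2_inner X (f k) (kernel_op X P (g k))) \<longlonglongrightarrow> cinner a (P x y b)"
    unfolding f_def g_def
    by (rule df_lim2[OF x P_cont_x[OF y] PgL2[unfolded g_def]]) (rule Kdf_unif[OF y])
  have "(\<lambda>k. L2_inner X (g k) (kernel_op X P (f k))) \<longlonglongrightarrow> cinner b (P y x a)"
    unfolding f_def g_def
    by (rule df_lim2[OF y P_cont_x[OF x] PfL2[unfolded f_def]]) (rule Kdf_unif[OF x])
  then have "(\<lambda>k. cnj (L2_inner X (g k) (kernel_op X P (f k)))) \<longlonglongrightarrow> cnj (cinner b (P y x a))"
    by (rule tendsto_cnj)
  then have l2: "(\<lambda>k. L2_inner X (kernel_op X P (f k)) (g k)) \<longlonglongrightarrow> cinner (P y x a) b"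
    by (simp add: L2_inner_cnj[of X "kernel_op X P (f _)" "g _"] cinner_commute[of b])
  have "L2_inner X (f k) (kernel_op X P (g k)) = L2_inner X (kernel_op X P (f k)) (g k)" for k
    by (rule P_herm[OF fL2 gL2])
  then show ?thesis using l1 l2 LIMSEQ_unique by simp
qed

end

theorem lemma5p20:
  fixes X :: "'a::euclidean_space set"
    and P :: "'a \<Rightarrow> 'a \<Rightarrow> 'h::{complex_inner,banach,second_countable_topology} \<Rightarrow> 'h"
    and lam :: "nat \<Rightarrow> real"
    and \<phi> :: "nat \<Rightarrow> 'a \<Rightarrow> 'h"
    and R :: "'a \<Rightarrow> 'a \<Rightarrow> 'h \<Rightarrow> 'h"
  assumes X_compact: "compact X"
    and X_support: "\<And>U. open U \<Longrightarrow> U \<inter> X \<noteq> {} \<Longrightarrow> emeasure lebesgue (U \<inter> X) > 0"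
    and P_hs: "\<And>x y. x \<in> X \<Longrightarrow> y \<in> X \<Longrightarrow> hilbert_schmidt (P x y)"
    and P_cont: "\<And>x y e. x \<in> X \<Longrightarrow> y \<in> X \<Longrightarrow> e > 0 \<Longrightarrow>
        \<exists>d>0. \<forall>x'\<in>X. \<forall>y'\<in>X. dist (x', y') (x, y) < d \<longrightarrow>
                 hs_norm (\<lambda>h. P x' y' h - P x y h) < e"
    and P_herm: "\<And>f g. f \<in> L2 X \<Longrightarrow> g \<in> L2 X \<Longrightarrow>
        L2_inner X f (kernel_op X P g) = L2_inner X (kernel_op X P f) g"
    and P_nonneg: "\<And>f. f \<in> L2 X \<Longrightarrow>
        Im (L2_inner X f (kernel_op X P f)) = 0 \<and> Re (L2_inner X f (kernel_op X P f)) \<ge> 0"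
    and phi_cont: "\<And>l. continuous_on X (\<phi> l)"
    and phi_L2: "\<And>l. \<phi> l \<in> L2 X"
    and phi_orthonormal: "\<And>k l. L2_inner X (\<phi> k) (\<phi> l) = (if k = l then 1 else 0)"
    and eigen: "\<And>l. AE x in lebesgue_on X. kernel_op X P (\<phi> l) x = scaleC (complex_of_real (lam l)) (\<phi> l x)"
    and eigen_complete: "\<And>f. f \<in> L2 X \<Longrightarrow> (\<forall>l. L2_inner X (\<phi> l) f = 0) \<Longrightarrow>
        AE x in lebesgue_on X. kernel_op X P f x = 0"
    and R_hs: "\<And>x y. x \<in> X \<Longrightarrow> y \<in> X \<Longrightarrow> hilbert_schmidt (R x y)"
    and R_conv:
      "(\<forall>y\<in>X. \<forall>e>0. \<exists>N. \<forall>n\<ge>N. \<forall>x\<in>X.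
          hs_norm (\<lambda>h. (\<Sum>l<n. scaleC (complex_of_real (lam l)) (rank1 (\<phi> l x) (\<phi> l y) h)) - R x y h) < e)
     \<or> (\<forall>x\<in>X. \<forall>e>0. \<exists>N. \<forall>n\<ge>N. \<forall>y\<in>X.
          hs_norm (\<lambda>h. (\<Sum>l<n. scaleC (complex_of_real (lam l)) (rank1 (\<phi> l x) (\<phi> l y) h)) - R x y h) < e)"
  shows "\<forall>x\<in>X. \<forall>y\<in>X. P x y = R x y"
proof (cases "X = {}")
  case True then show ?thesis by simp
next
  case False
  interpret kern X P lam \<phi>
    by (rule kern.intro) (fact X_compact X_support P_hs P_cont P_herm phi_cont phi_L2 phi_orthonormal eigen eigen_complete False)+
  have onb: "\<exists>B::'h set. is_onb B" by (rule ex_onb)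
  define Sop where "Sop n x y = (\<lambda>h. \<Sum>l<n. scaleC (complex_of_real (lam l)) (rank1 (\<phi> l x) (\<phi> l y) h))" for n x y
  have Sop_eq: "Sop n x y h = (\<Sum>l<n. scaleC (complex_of_real (lam l) * cinner (\<phi> l y) h) (\<phi> l x))" for n x y h
    by (simp add: Sop_def rank1_def scaleC_scaleC)
  define D where "D n x y = (\<lambda>h. Sop n x y h - R x y h)" for n x y
  have D_hsB: "hsB (D n x y)" if "x \<in> X" "y \<in> X" for n x y
    unfolding D_def Sop_def
    by (intro hsB_diff hsB_sum hsB_scale hsB_rank1 onb hs_imp_hsB R_hs that) simp
  have D_small: "norm (D n x y v) \<le> e * norm v" if "x \<in> X" "y \<in> X" "hs_norm (D n x y) < e" for n x y v e
    using hsB_op_small[OF D_hsB[OF that(1,2)] onb, where \<epsilon>=e and h=v] that(3) by simp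
  have conv: "(\<forall>y\<in>X. \<forall>e>0. \<exists>N. \<forall>n\<ge>N. \<forall>x\<in>X. hs_norm (D n x y) < e)
     \<or> (\<forall>x\<in>X. \<forall>e>0. \<exists>N. \<forall>n\<ge>N. \<forall>y\<in>X. hs_norm (D n x y) < e)"
    using R_conv by (simp add: D_def Sop_def)
  have ptw_hs: "\<forall>e>0. \<exists>N. \<forall>n\<ge>N. hs_norm (D n x y) < e" if "x \<in> X" "y \<in> X" for x y
    using conv that by blast
  have ptw: "(\<lambda>n. Sop n x y v) \<longlonglongrightarrow> R x y v" if xy: "x \<in> X" "y \<in> X" for x y v
  proof (rule LIMSEQ_I)
    fix r :: real assume r: "r > 0"
    define e where "e = r / (norm v + 1)"
    have e: "e > 0" unfolding e_def using r by (simp add: add_nonneg_pos)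
    have "norm v / (norm v + 1) < 1" by (simp add: divide_less_eq add_pos_nonneg) (smt (verit) norm_ge_zero)
    then have "r * (norm v / (norm v + 1)) < r * 1" using r by (rule mult_strict_left_mono)
    then have lt: "e * norm v < r" unfolding e_def by simp
    obtain N where N: "\<And>n. n \<ge> N \<Longrightarrow> hs_norm (D n x y) < e" using ptw_hs[OF xy] e by blast
    have "norm (Sop n x y v - R x y v) < r" if "n \<ge> N" for n
      using D_small[OF xy N[OF that], where v=v] lt unfolding D_def by simp
    then show "\<exists>no. \<forall>n\<ge>no. norm (Sop n x y v - R x y v) < r" by blast
  qed
  show ?thesis
  proof (intro ballI)
    fix x y assume x: "x \<in> X" and y: "y \<in> X"
    show "P x y = R x y"
      using conv
    proof (elim disjE)
      assume c1: "\<forall>y\<in>X. \<forall>e>0. \<exists>N. \<forall>n\<ge>N. \<forall>x\<in>X. hs_norm (D n x y) < e"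
      show ?thesis
      proof (rule ext)
        fix h
        have ul: "uniform_limit X (\<lambda>n x'. \<Sum>l<n. scaleC (complex_of_real (lam l) * cinner (\<phi> l y) h) (\<phi> l x'))
            (\<lambda>x'. R x' y h) sequentially"
          unfolding uniform_limit_sequentially_iff
        proof (intro allI impI)
          fix r :: real assume r: "r > 0"
          define e where "e = r / (norm h + 1)"
          have e: "e > 0" unfolding e_def using r by (simp add: add_nonneg_pos)
          have "norm h / (norm h + 1) < 1" by (simp add: divide_less_eq add_pos_nonneg) (smt (verit) norm_ge_zero)
          then have "r * (norm h / (norm h + 1)) < r * 1" using r by (rule mult_strict_left_mono)
          then have lt: "e * norm h < r" unfolding e_def by simp
          obtain N where N: "\<And>n x'. n \<ge> N \<Longrightarrow> x' \<in> X \<Longrightarrow> hs_norm (D n x' y) < e"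
            using c1 y e by blast
          have "dist (\<Sum>l<n. scaleC (complex_of_real (lam l) * cinner (\<phi> l y) h) (\<phi> l x')) (R x' y h) < r"
            if "n \<ge> N" "x' \<in> X" for n x'
            using D_small[OF that(2) y N[OF that], where v=h] lt unfolding D_def by (simp add: Sop_eq dist_norm)
          then show "\<exists>N. \<forall>n\<ge>N. \<forall>x'\<in>X.
              dist (\<Sum>l<n. scaleC (complex_of_real (lam l) * cinner (\<phi> l y) h) (\<phi> l x')) (R x' y h) < r"
            by blast
        qed
        show "P x y h = R x y h" using core[OF y ul] x by simp
      qed
    next
      assume c2: "\<forall>x\<in>X. \<forall>e>0. \<exists>N. \<forall>n\<ge>N. \<forall>y\<in>X. hs_norm (D n x y) < e"
      have "cinner a (P x y b) = cinner a (R x y b)" for a b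
      proof -
        define S where "S n y' = (\<Sum>l<n. scaleC (complex_of_real (lam l) * cinner (\<phi> l x) a) (\<phi> l y'))" for n y'
        have trm: "cnj (complex_of_real r * cinner p a) * cinner q v = complex_of_real r * cinner q v * cinner a p"
          for r p q v by (simp add: cinner_commute[of p a] mult_ac)
        have Sc: "cinner (S n y') v = cinner a (Sop n x y' v)" for n y' v
          unfolding S_def Sop_eq cinner_sum_left cinner_sum_right cinner_scaleC_left cinner_scaleC_right
          by (intro sum.cong refl) (simp add: trm cinner_commute[of a])
        have Cau: "uniformly_Cauchy_on X S"
          unfolding uniformly_Cauchy_on_def
        proof (intro allI impI)
          fix r :: real assume r: "r > 0"
          define e where "e = r / (2 * (norm a + 1))"
          have e: "e > 0" unfolding e_def using r by (simp add: add_nonneg_pos)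
          have lt: "2 * e * norm a < r"
          proof -
            have "norm a / (norm a + 1) < 1" by (simp add: divide_less_eq add_pos_nonneg) (smt (verit) norm_ge_zero)
            then have "r * (norm a / (norm a + 1)) < r * 1" using r by (rule mult_strict_left_mono)
            moreover have "norm a + 1 > 0" by (smt (verit) norm_ge_zero)
            then have "2 * e * norm a = r * (norm a / (norm a + 1))"
              unfolding e_def by (simp add: field_simps)
            ultimately show ?thesis by simp
          qed
          obtain N where N: "\<And>n y'. n \<ge> N \<Longrightarrow> y' \<in> X \<Longrightarrow> hs_norm (D n x y') < e"
            using c2 x e by blast
          have "dist (S m y') (S n y') < r" if "y' \<in> X" "m \<ge> N" "n \<ge> N" for y' m n
          proof -
            define w where "w = S m y' - S n y'"
            have "cinner w w = cinner a (Sop m x y' w) - cinner a (Sop n x y' w)"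
              unfolding w_def cinner_diff_left by (simp add: Sc w_def[symmetric])
            also have "\<dots> = cinner a (D m x y' w - D n x y' w)"
              by (simp add: D_def cinner_diff_right)
            finally have cw: "cinner w w = cinner a (D m x y' w - D n x y' w)" .
            have "(norm w)\<^sup>2 = cmod (cinner w w)" unfolding cinner_self norm_of_real by simp
            also have "\<dots> \<le> norm a * norm (D m x y' w - D n x y' w)"
              unfolding cw by (rule cinner_cauchy_schwarz)
            also have "\<dots> \<le> norm a * (e * norm w + e * norm w)"
              by (intro mult_left_mono order_trans[OF norm_triangle_ineq4] add_mono D_small x that(1) N that) auto
            finally have "norm w * norm w \<le> norm w * (2 * e * norm a)"
              by (simp add: power2_eq_square algebra_simps)
            then have "norm w \<le> 2 * e * norm a"
              using e by (cases "norm w = 0") (auto simp: mult_le_cancel_left)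
            then show ?thesis using lt by (simp add: dist_norm w_def)
          qed
          then show "\<exists>M. \<forall>y'\<in>X. \<forall>m\<ge>M. \<forall>n\<ge>M. dist (S m y') (S n y') < r" by blast
        qed
        obtain Q where ul: "uniform_limit X S Q sequentially"
          using Cauchy_uniformly_convergent[OF Cau] unfolding uniformly_convergent_on_def by blast
        have PQ: "P y x a = Q y"
          using core[OF x ul[unfolded S_def]] y by simp
        have l1: "(\<lambda>n. cinner (S n y) b) \<longlonglongrightarrow> cinner (Q y) b"
          by (intro tendsto_cinner tendsto_uniform_limitI[OF ul y] tendsto_const)
        have l2: "(\<lambda>n. cinner (S n y) b) \<longlonglongrightarrow> cinner a (R x y b)"
          unfolding Sc by (intro tendsto_cinner tendsto_const ptw x y)
        have "cinner (Q y) b = cinner a (R x y b)" using l1 l2 LIMSEQ_unique by blast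
        then show ?thesis using P_herm_pt[OF x y, of a b] PQ by simp
      qed
      then show ?thesis by (intro ext cinner_ext) blast
    qed
  qed
qed


end
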